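(* Let $(M^n,g,f,E)$ be an electrostatic system. Then, on the set where $f>0$, $$\mathrm{div}\Big[\frac1f\Big(\nabla|\nabla f|^2-4f\langle\nabla f,E\rangle E^\flat+\frac{2Rf}{n(n-1)}\nabla f\Big)\Big]=2f|\mathring{Ric}|^2+4f\,\mathring{Ric}(E,E)+\frac{n-2}{n}\langle\nabla R,\nabla f\rangle,$$ where $R$ is the scalar curvature and $\mathring{Ric}=Ric-\frac Rng$.
   Context: An electrostatic system $(M^n,g,f,E)$, $n\ge3$, consists of a Riemannian manifold $(M^n,g)$, a smooth function $f$, a smooth vector field $E$ with metric-dual 1-form $E^\flat$ (identified with $E$ via $g$ when taking divergence), and a constant $\Lambda\in\mathbb R$ such that $$\nabla^2 f=f\Big(Ric-\tfrac{2}{n-1}\Lambda g+2E^\flat\otimes E^\flat-\tfrac{2}{n-1}|E|^2g\Big),\quad \Delta f=\tfrac{2}{n-1}\big((n-2)|E|^2-\Lambda\big)f,\quad \mathrm{div}\,E=0,\quad d(fE^\flat)=0.$$ $f$ is positive in the interior of $M$ and, if $M$ has boundary, $f^{-1}(0)=\partial M$. *)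

theory Defs
  imports "HOL-Analysis.Analysis"
begin

text \<open>Local-coordinate Riemannian geometry on an open set U of real^'n
  (a coordinate chart), with metric components g x $ i $ j.
  Vector fields are given by components X x $ i, one-forms by w x $ i.\<close>

definition pd :: "'n::finite \<Rightarrow> (real^'n \<Rightarrow> real) \<Rightarrow> real^'n \<Rightarrow> real" where
  "pd i h x = frechet_derivative h (at x) (axis i 1)"

definition smooth_on :: "(real^'n::finite) set \<Rightarrow> (real^'n \<Rightarrow> real) \<Rightarrow> bool" where
  "smooth_on U h \<longleftrightarrow> (\<forall>is :: 'n list. \<forall>x\<in>U. (foldr pd is h) differentiable (at x))"

definition riemannian_metric_on :: "(real^'n::finite) set \<Rightarrow> (real^'n \<Rightarrow> real^'n^'n) \<Rightarrow> bool" where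
  "riemannian_metric_on U g \<longleftrightarrow>
     (\<forall>i j. smooth_on U (\<lambda>x. g x $ i $ j)) \<and>
     (\<forall>x\<in>U. \<forall>i j. g x $ i $ j = g x $ j $ i) \<and>
     (\<forall>x\<in>U. \<forall>v. v \<noteq> 0 \<longrightarrow> v \<bullet> (g x *v v) > 0)"

definition ginv :: "(real^'n::finite \<Rightarrow> real^'n^'n) \<Rightarrow> real^'n \<Rightarrow> real^'n^'n" where
  "ginv g x = matrix_inv (g x)"

definition christ :: "(real^'n::finite \<Rightarrow> real^'n^'n) \<Rightarrow> 'n \<Rightarrow> 'n \<Rightarrow> 'n \<Rightarrow> real^'n \<Rightarrow> real" where
  "christ g k i j x = (1/2) * (\<Sum>l\<in>UNIV. ginv g x $ k $ l *
      (pd i (\<lambda>y. g y $ j $ l) x + pd j (\<lambda>y. g y $ i $ l) x - pd l (\<lambda>y. g y $ i $ j) x))"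

definition ricci :: "(real^'n::finite \<Rightarrow> real^'n^'n) \<Rightarrow> 'n \<Rightarrow> 'n \<Rightarrow> real^'n \<Rightarrow> real" where
  "ricci g i j x = (\<Sum>k\<in>UNIV. pd k (christ g k i j) x - pd j (christ g k i k) x
      + (\<Sum>l\<in>UNIV. christ g k k l x * christ g l i j x - christ g k j l x * christ g l i k x))"

definition scal :: "(real^'n::finite \<Rightarrow> real^'n^'n) \<Rightarrow> real^'n \<Rightarrow> real" where
  "scal g x = (\<Sum>i\<in>UNIV. \<Sum>j\<in>UNIV. ginv g x $ i $ j * ricci g i j x)"

definition tricci :: "(real^'n::finite \<Rightarrow> real^'n^'n) \<Rightarrow> 'n \<Rightarrow> 'n \<Rightarrow> real^'n \<Rightarrow> real" where
  "tricci g i j x = ricci g i j x - scal g x / real CARD('n) * g x $ i $ j"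

definition tnorm2 :: "(real^'n::finite \<Rightarrow> real^'n^'n) \<Rightarrow> ('n \<Rightarrow> 'n \<Rightarrow> real^'n \<Rightarrow> real) \<Rightarrow> real^'n \<Rightarrow> real" where
  "tnorm2 g T x = (\<Sum>i\<in>UNIV. \<Sum>j\<in>UNIV. \<Sum>a\<in>UNIV. \<Sum>b\<in>UNIV.
      ginv g x $ i $ a * ginv g x $ j $ b * T i j x * T a b x)"

definition hess :: "(real^'n::finite \<Rightarrow> real^'n^'n) \<Rightarrow> (real^'n \<Rightarrow> real) \<Rightarrow> 'n \<Rightarrow> 'n \<Rightarrow> real^'n \<Rightarrow> real" where
  "hess g f i j x = pd i (pd j f) x - (\<Sum>k\<in>UNIV. christ g k i j x * pd k f x)"

definition lap :: "(real^'n::finite \<Rightarrow> real^'n^'n) \<Rightarrow> (real^'n \<Rightarrow> real) \<Rightarrow> real^'n \<Rightarrow> real" where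
  "lap g f x = (\<Sum>i\<in>UNIV. \<Sum>j\<in>UNIV. ginv g x $ i $ j * hess g f i j x)"

definition dif :: "(real^'n::finite \<Rightarrow> real) \<Rightarrow> real^'n \<Rightarrow> real^'n" where
  "dif h x = (\<chi> i. pd i h x)"

definition flat :: "(real^'n::finite \<Rightarrow> real^'n^'n) \<Rightarrow> (real^'n \<Rightarrow> real^'n) \<Rightarrow> real^'n \<Rightarrow> real^'n" where
  "flat g X x = (\<chi> i. \<Sum>j\<in>UNIV. g x $ i $ j * X x $ j)"

definition sharp :: "(real^'n::finite \<Rightarrow> real^'n^'n) \<Rightarrow> (real^'n \<Rightarrow> real^'n) \<Rightarrow> real^'n \<Rightarrow> real^'n" where
  "sharp g w x = (\<chi> i. \<Sum>j\<in>UNIV. ginv g x $ i $ j * w x $ j)"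

definition grad :: "(real^'n::finite \<Rightarrow> real^'n^'n) \<Rightarrow> (real^'n \<Rightarrow> real) \<Rightarrow> real^'n \<Rightarrow> real^'n" where
  "grad g h = sharp g (dif h)"

definition ginner :: "(real^'n::finite \<Rightarrow> real^'n^'n) \<Rightarrow> real^'n \<Rightarrow> real^'n \<Rightarrow> real^'n \<Rightarrow> real" where
  "ginner g x v w = (\<Sum>i\<in>UNIV. \<Sum>j\<in>UNIV. g x $ i $ j * v $ i * w $ j)"

definition divv :: "(real^'n::finite \<Rightarrow> real^'n^'n) \<Rightarrow> (real^'n \<Rightarrow> real^'n) \<Rightarrow> real^'n \<Rightarrow> real" where
  "divv g X x = (\<Sum>i\<in>UNIV. pd i (\<lambda>y. X y $ i) x)
      + (\<Sum>i\<in>UNIV. \<Sum>k\<in>UNIV. christ g i i k x * X x $ k)"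

definition closed_form_on :: "(real^'n::finite) set \<Rightarrow> (real^'n \<Rightarrow> real^'n) \<Rightarrow> bool" where
  "closed_form_on U w \<longleftrightarrow> (\<forall>x\<in>U. \<forall>i j. pd i (\<lambda>y. w y $ j) x = pd j (\<lambda>y. w y $ i) x)"

text \<open>Electrostatic system, written in a coordinate chart U (open) of the interior of M,
  where f > 0.\<close>
definition electrostatic_system ::
  "(real^'n::finite) set \<Rightarrow> (real^'n \<Rightarrow> real^'n^'n) \<Rightarrow> (real^'n \<Rightarrow> real) \<Rightarrow> (real^'n \<Rightarrow> real^'n) \<Rightarrow> real \<Rightarrow> bool" where
  "electrostatic_system U g f E \<Lambda> \<longleftrightarrow>
     open U \<and> riemannian_metric_on U g \<and> smooth_on U f \<and> (\<forall>i. smooth_on U (\<lambda>x. E x $ i)) \<and>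
     (\<forall>x\<in>U. f x > 0) \<and>
     (\<forall>x\<in>U. \<forall>i j. hess g f i j x = f x * (ricci g i j x - 2 / (real CARD('n) - 1) * \<Lambda> * g x $ i $ j
          + 2 * flat g E x $ i * flat g E x $ j
          - 2 / (real CARD('n) - 1) * ginner g x (E x) (E x) * g x $ i $ j)) \<and>
     (\<forall>x\<in>U. lap g f x = 2 / (real CARD('n) - 1) * ((real CARD('n) - 2) * ginner g x (E x) (E x) - \<Lambda>) * f x) \<and>
     (\<forall>x\<in>U. divv g E x = 0) \<and>
     closed_form_on U (\<lambda>x. f x *\<^sub>R flat g E x)"

end

theory Submission
  imports Defs
begin


section \<open>Partial derivatives: basic rules\<close>

lemma pd_fd: "pd i h x = frechet_derivative h (at x) (axis i 1)"
  by (simp add: pd_def)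

lemma pd_has: "(h has_derivative D) (at x) \<Longrightarrow> pd i h x = D (axis i 1)"
  unfolding pd_def by (metis frechet_derivative_at)

lemma hasderiv_cong:
  assumes "open U" "x \<in> U" "\<And>y. y \<in> U \<Longrightarrow> h1 y = h2 y"
  shows "(h1 has_derivative D) (at x) \<longleftrightarrow> (h2 has_derivative D) (at x)"
  using has_derivative_transform_within_open[OF _ assms(1,2), of h1 D UNIV h2]
        has_derivative_transform_within_open[OF _ assms(1,2), of h2 D UNIV h1] assms(3)
  by auto

lemma pd_cong:
  assumes "open U" "x \<in> U" "\<And>y. y \<in> U \<Longrightarrow> h1 y = h2 y"
  shows "pd i h1 x = pd i h2 x"
proof -
  have "frechet_derivative h1 (at x) = frechet_derivative h2 (at x)"
    unfolding frechet_derivative_def using hasderiv_cong[OF assms] by simp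
  then show ?thesis by (simp add: pd_def)
qed

lemma diff_cong:
  assumes "open U" "x \<in> U" "\<And>y. y \<in> U \<Longrightarrow> h1 y = h2 y"
  shows "h1 differentiable at x \<longleftrightarrow> h2 differentiable at x"
  unfolding differentiable_def using hasderiv_cong[OF assms] by simp

lemma fd_works: "h differentiable at x \<Longrightarrow> (h has_derivative frechet_derivative h (at x)) (at x)"
  using frechet_derivative_works by blast

lemma pd_add:
  assumes "h1 differentiable at x" "h2 differentiable at x"
  shows "pd i (\<lambda>y. h1 y + h2 y) x = pd i h1 x + pd i h2 x"
  using pd_has[OF has_derivative_add[OF fd_works[OF assms(1)] fd_works[OF assms(2)]]]
  by (simp add: pd_def)

lemma pd_diff:
  assumes "h1 differentiable at x" "h2 differentiable at x"
  shows "pd i (\<lambda>y. h1 y - h2 y) x = pd i h1 x - pd i h2 x"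
  using pd_has[OF has_derivative_diff[OF fd_works[OF assms(1)] fd_works[OF assms(2)]]]
  by (simp add: pd_def)

lemma pd_mult:
  assumes "h1 differentiable at x" "h2 differentiable at x"
  shows "pd i (\<lambda>y. h1 y * h2 y) x = h1 x * pd i h2 x + pd i h1 x * h2 x"
  using pd_has[OF has_derivative_mult[OF fd_works[OF assms(1)] fd_works[OF assms(2)]]]
  by (simp add: pd_def)

lemma pd_const: "pd i (\<lambda>y. c) x = 0"
  by (simp add: pd_def)

lemma pd_sum:
  assumes "finite S" "\<And>s. s \<in> S \<Longrightarrow> h s differentiable at x"
  shows "pd i (\<lambda>y. \<Sum>s\<in>S. h s y) x = (\<Sum>s\<in>S. pd i (h s) x)"
proof -
  have "((\<lambda>y. \<Sum>s\<in>S. h s y) has_derivative (\<lambda>v. \<Sum>s\<in>S. frechet_derivative (h s) (at x) v)) (at x)"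
    by (rule has_derivative_sum) (use fd_works assms(2) in blast)
  from pd_has[OF this] show ?thesis by (simp add: pd_def)
qed

lemma pd_inverse:
  assumes "h differentiable at x" "h x \<noteq> 0"
  shows "pd i (\<lambda>y. inverse (h y)) x = - (pd i h x / (h x * h x))"
proof -
  have "((\<lambda>y. inverse (h y)) has_derivative
     (\<lambda>v. - (inverse (h x) * frechet_derivative h (at x) v * inverse (h x)))) (at x)"
    using has_derivative_compose[OF fd_works[OF assms(1)] has_derivative_inverse'[OF assms(2)]] .
  from pd_has[OF this] show ?thesis by (simp add: pd_def divide_inverse mult_ac)
qed




section \<open>Finite-order smoothness classes\<close>

definition Ck :: "nat \<Rightarrow> (real^'n::finite) set \<Rightarrow> (real^'n \<Rightarrow> real) \<Rightarrow> bool" where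
  "Ck k U h \<longleftrightarrow> (\<forall>is::'n list. length is \<le> k \<longrightarrow> (\<forall>x\<in>U. foldr pd is h differentiable at x))"

lemma Ck_Suc: "Ck (Suc k) U h \<longleftrightarrow> (\<forall>x\<in>U. h differentiable at x) \<and> (\<forall>i. Ck k U (pd i h))"
proof
  assume a: "Ck (Suc k) U h"
  have "\<forall>x\<in>U. h differentiable at x" using a[unfolded Ck_def, rule_format, of "[]"] by simp
  moreover have "Ck k U (pd i h)" for i
    unfolding Ck_def
  proof (intro allI impI ballI)
    fix "is" :: "'a list" and x assume "length is \<le> k" "x \<in> U"
    then show "foldr pd is (pd i h) differentiable at x"
      using a[unfolded Ck_def, rule_format, of "is @ [i]" x] by simp
  qed
  ultimately show "(\<forall>x\<in>U. h differentiable at x) \<and> (\<forall>i. Ck k U (pd i h))" by blast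
next
  assume a: "(\<forall>x\<in>U. h differentiable at x) \<and> (\<forall>i. Ck k U (pd i h))"
  show "Ck (Suc k) U h"
    unfolding Ck_def
  proof (intro allI impI ballI)
    fix "is" :: "'a list" and x assume l: "length is \<le> Suc k" and x: "x \<in> U"
    show "foldr pd is h differentiable at x"
    proof (cases "is" rule: rev_exhaust)
      case Nil then show ?thesis using a x by simp
    next
      case (snoc ys y)
      then have "length ys \<le> k" using l by simp
      then show ?thesis using a x snoc unfolding Ck_def by simp
    qed
  qed
qed

lemma Ck_0: "Ck 0 U h \<longleftrightarrow> (\<forall>x\<in>U. h differentiable at x)"
  by (simp add: Ck_def)

lemma smooth_Ck: "smooth_on U h \<longleftrightarrow> (\<forall>k. Ck k U h)"
proof
  assume "smooth_on U h" then show "\<forall>k. Ck k U h" unfolding smooth_on_def Ck_def by blast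
next
  assume a: "\<forall>k. Ck k U h"
  show "smooth_on U h" unfolding smooth_on_def
  proof (intro allI ballI)
    fix "is" :: "'a list" and x assume "x \<in> U"
    then show "foldr pd is h differentiable at x" using a unfolding Ck_def by blast
  qed
qed

lemma Ck_mono: "Ck (Suc k) U h \<Longrightarrow> Ck k U h"
  unfolding Ck_def by simp

lemma Ck_mono': "Ck m U h \<Longrightarrow> k \<le> m \<Longrightarrow> Ck k U h"
  unfolding Ck_def by simp

lemma Ck_cong:
  assumes "open U" "\<And>y. y \<in> U \<Longrightarrow> h1 y = h2 y" "Ck k U h1"
  shows "Ck k U h2"
  using assms(2,3)
proof (induction k arbitrary: h1 h2)
  case 0 then show ?case using diff_cong[OF assms(1), of _ h1 h2] unfolding Ck_0 by blast
next
  case (Suc k)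
  have d: "\<forall>x\<in>U. h2 differentiable at x"
    using Suc.prems diff_cong[OF assms(1)] unfolding Ck_Suc by blast
  have "Ck k U (pd i h2)" for i
  proof -
    have "\<And>y. y \<in> U \<Longrightarrow> pd i h1 y = pd i h2 y"
      using pd_cong[OF assms(1)] Suc.prems(1) by blast
    then show ?thesis using Suc.IH Suc.prems(2) unfolding Ck_Suc by blast
  qed
  then show ?case using d by (simp add: Ck_Suc)
qed

lemma pd_const_fun: "pd i (\<lambda>y. c) = (\<lambda>y. 0)"
  by (simp add: pd_def fun_eq_iff)

lemma Ck_const: "Ck k U (\<lambda>y. c)"
proof (induction k arbitrary: c)
  case 0 then show ?case by (simp add: Ck_0)
next
  case (Suc k) then show ?case by (simp add: Ck_Suc pd_const_fun)
qed

lemma Ck_diffat: "Ck k U h \<Longrightarrow> x \<in> U \<Longrightarrow> h differentiable at x"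
  unfolding Ck_def by (drule spec[of _ "[]"]) simp




context
  fixes U :: "(real^'n::finite) set"
  assumes openU: "open U"
begin

lemma Ck_add: "Ck k U a \<Longrightarrow> Ck k U b \<Longrightarrow> Ck k U (\<lambda>y. a y + b y)"
proof (induction k arbitrary: a b)
  case 0 then show ?case by (simp add: Ck_0 differentiable_add)
next
  case (Suc k)
  have "Ck k U (pd i (\<lambda>y. a y + b y))" for i
  proof -
    have "Ck k U (\<lambda>y. pd i a y + pd i b y)" using Suc by (simp add: Ck_Suc)
    moreover have "\<And>y. y \<in> U \<Longrightarrow> pd i a y + pd i b y = pd i (\<lambda>y. a y + b y) y"
      using Suc.prems by (simp add: Ck_Suc pd_add)
    ultimately show ?thesis by (rule Ck_cong[OF openU, rotated])
  qed
  then show ?case using Suc.prems by (simp add: Ck_Suc differentiable_add)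
qed

lemma Ck_neg: "Ck k U a \<Longrightarrow> Ck k U (\<lambda>y. - a y)"
proof (induction k arbitrary: a)
  case 0 then show ?case by (simp add: Ck_0 differentiable_minus)
next
  case (Suc k)
  have "Ck k U (pd i (\<lambda>y. - a y))" for i
  proof -
    have "Ck k U (\<lambda>y. - pd i a y)" using Suc by (simp add: Ck_Suc)
    moreover have "\<And>y. y \<in> U \<Longrightarrow> - pd i a y = pd i (\<lambda>y. - a y) y"
      using Suc.prems pd_diff[of "\<lambda>y. 0" _ a] by (simp add: Ck_Suc pd_const)
    ultimately show ?thesis by (rule Ck_cong[OF openU, rotated])
  qed
  then show ?case using Suc.prems by (simp add: Ck_Suc differentiable_minus)
qed

lemma Ck_diff: "Ck k U a \<Longrightarrow> Ck k U b \<Longrightarrow> Ck k U (\<lambda>y. a y - b y)"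
  using Ck_add[of k a "\<lambda>y. - b y"] Ck_neg[of k b] by simp

lemma Ck_mult: "Ck k U a \<Longrightarrow> Ck k U b \<Longrightarrow> Ck k U (\<lambda>y. a y * b y)"
proof (induction k arbitrary: a b)
  case 0 then show ?case by (simp add: Ck_0 differentiable_mult)
next
  case (Suc k)
  have "Ck k U (pd i (\<lambda>y. a y * b y))" for i
  proof -
    have ak: "Ck k U a" "Ck k U b" using Suc.prems Ck_mono by blast+
    have "Ck k U (pd i a)" "Ck k U (pd i b)" using Suc.prems by (simp_all add: Ck_Suc)
    then have "Ck k U (\<lambda>y. a y * pd i b y)" "Ck k U (\<lambda>y. pd i a y * b y)"
      using Suc.IH ak by blast+
    then have "Ck k U (\<lambda>y. a y * pd i b y + pd i a y * b y)"
      by (rule Ck_add)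
    moreover have "\<And>y. y \<in> U \<Longrightarrow> a y * pd i b y + pd i a y * b y = pd i (\<lambda>y. a y * b y) y"
      using Suc.prems by (simp add: Ck_Suc pd_mult)
    ultimately show ?thesis by (rule Ck_cong[OF openU, rotated])
  qed
  then show ?case using Suc.prems by (simp add: Ck_Suc differentiable_mult)
qed

lemma Ck_inverse: "Ck k U d \<Longrightarrow> (\<And>y. y \<in> U \<Longrightarrow> d y \<noteq> 0) \<Longrightarrow> Ck k U (\<lambda>y. inverse (d y))"
proof (induction k arbitrary: d)
  case 0 then show ?case by (simp add: Ck_0 differentiable_inverse)
next
  case (Suc k)
  have ik: "Ck k U (\<lambda>y. inverse (d y))" using Suc Ck_mono by blast
  have "Ck k U (pd i (\<lambda>y. inverse (d y)))" for i
  proof -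
    have "Ck k U (\<lambda>y. - (pd i d y * (inverse (d y) * inverse (d y))))"
      using Suc.prems ik by (intro Ck_neg Ck_mult) (auto simp: Ck_Suc)
    moreover have "\<And>y. y \<in> U \<Longrightarrow> - (pd i d y * (inverse (d y) * inverse (d y))) = pd i (\<lambda>y. inverse (d y)) y"
      using Suc.prems by (simp add: Ck_Suc pd_inverse divide_inverse)
    ultimately show ?thesis by (rule Ck_cong[OF openU, rotated])
  qed
  then show ?case using Suc.prems by (simp add: Ck_Suc differentiable_inverse)
qed

lemma Ck_sum: "finite S \<Longrightarrow> (\<And>s. s \<in> S \<Longrightarrow> Ck k U (h s)) \<Longrightarrow> Ck k U (\<lambda>y. \<Sum>s\<in>S. h s y)"
proof (induction S rule: finite_induct)
  case empty then show ?case by (simp add: Ck_const)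
next
  case (insert s S) then show ?case by (simp add: Ck_add)
qed

lemma Ck_prod: "finite S \<Longrightarrow> (\<And>s. s \<in> S \<Longrightarrow> Ck k U (h s)) \<Longrightarrow> Ck k U (\<lambda>y. \<Prod>s\<in>S. h s y)"
proof (induction S rule: finite_induct)
  case empty then show ?case by (simp add: Ck_const)
next
  case (insert s S) then show ?case by (simp add: Ck_mult)
qed

lemma sm_add: "smooth_on U a \<Longrightarrow> smooth_on U b \<Longrightarrow> smooth_on U (\<lambda>y. a y + b y)"
  by (simp add: smooth_Ck Ck_add)
lemma sm_diff: "smooth_on U a \<Longrightarrow> smooth_on U b \<Longrightarrow> smooth_on U (\<lambda>y. a y - b y)"
  by (simp add: smooth_Ck Ck_diff)
lemma sm_neg: "smooth_on U a \<Longrightarrow> smooth_on U (\<lambda>y. - a y)"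
  by (simp add: smooth_Ck Ck_neg)
lemma sm_mult: "smooth_on U a \<Longrightarrow> smooth_on U b \<Longrightarrow> smooth_on U (\<lambda>y. a y * b y)"
  by (simp add: smooth_Ck Ck_mult)
lemma sm_const: "smooth_on U (\<lambda>y. c)"
  by (simp add: smooth_Ck Ck_const)
lemma sm_inverse: "smooth_on U d \<Longrightarrow> (\<And>y. y \<in> U \<Longrightarrow> d y \<noteq> 0) \<Longrightarrow> smooth_on U (\<lambda>y. inverse (d y))"
  by (simp add: smooth_Ck Ck_inverse)
lemma sm_divide: "smooth_on U a \<Longrightarrow> smooth_on U d \<Longrightarrow> (\<And>y. y \<in> U \<Longrightarrow> d y \<noteq> 0) \<Longrightarrow> smooth_on U (\<lambda>y. a y / d y)"
  using sm_mult[OF _ sm_inverse] by (simp add: divide_inverse)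
lemma sm_sum: "finite S \<Longrightarrow> (\<And>s. s \<in> S \<Longrightarrow> smooth_on U (h s)) \<Longrightarrow> smooth_on U (\<lambda>y. \<Sum>s\<in>S. h s y)"
  by (simp add: smooth_Ck Ck_sum)
lemma sm_sumU: "(\<And>s. smooth_on U (h s)) \<Longrightarrow> smooth_on U (\<lambda>y. \<Sum>s\<in>(UNIV::'a::finite set). h s y)"
  by (rule sm_sum) auto
lemma sm_prod: "finite S \<Longrightarrow> (\<And>s. s \<in> S \<Longrightarrow> smooth_on U (h s)) \<Longrightarrow> smooth_on U (\<lambda>y. \<Prod>s\<in>S. h s y)"
  by (simp add: smooth_Ck Ck_prod)
lemma sm_cong: "(\<And>y. y \<in> U \<Longrightarrow> h1 y = h2 y) \<Longrightarrow> smooth_on U h1 \<Longrightarrow> smooth_on U h2"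
  using Ck_cong[OF openU] by (meson smooth_Ck)

end

lemma sm_pd: "smooth_on U h \<Longrightarrow> smooth_on U (pd i h)"
  unfolding smooth_Ck using Ck_Suc by blast

lemma sm_diffat: "smooth_on U h \<Longrightarrow> x \<in> U \<Longrightarrow> h differentiable at x"
  using Ck_diffat smooth_Ck by blast




section \<open>Symmetry of second partial derivatives\<close>

lemma line_deriv:
  fixes h :: "real^'n::finite \<Rightarrow> real"
  assumes "h differentiable at (y + u *\<^sub>R v)"
  shows "((\<lambda>t. h (y + t *\<^sub>R v)) has_real_derivative frechet_derivative h (at (y + u *\<^sub>R v)) v) (at u)"
proof -
  have l: "((\<lambda>t. y + t *\<^sub>R v) has_derivative (\<lambda>t. t *\<^sub>R v)) (at u)"
    by (auto intro!: derivative_eq_intros)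
  have "((\<lambda>t. h (y + t *\<^sub>R v)) has_derivative (\<lambda>t. frechet_derivative h (at (y + u *\<^sub>R v)) (t *\<^sub>R v))) (at u)"
    using has_derivative_compose[OF l fd_works[OF assms]] .
  moreover have "linear (frechet_derivative h (at (y + u *\<^sub>R v)))"
    using assms by (rule linear_frechet_derivative)
  ultimately have "((\<lambda>t. h (y + t *\<^sub>R v)) has_derivative (\<lambda>t. t * frechet_derivative h (at (y + u *\<^sub>R v)) v)) (at u)"
    by (simp add: linear_cmul)
  moreover have "(\<lambda>t. t * frechet_derivative h (at (y + u *\<^sub>R v)) v) = (*) (frechet_derivative h (at (y + u *\<^sub>R v)) v)"
    by (rule ext) (simp add: mult.commute)
  ultimately show ?thesis
    by (simp add: has_field_derivative_def)
qed

lemma line_deriv_pd: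
  fixes h :: "real^'n::finite \<Rightarrow> real"
  assumes "h differentiable at (y + u *\<^sub>R axis i 1)"
  shows "((\<lambda>t. h (y + t *\<^sub>R axis i 1)) has_real_derivative pd i h (y + u *\<^sub>R axis i 1)) (at u)"
  using line_deriv[OF assms] by (simp add: pd_def)

lemma double_mvt:
  fixes h :: "real^'n::finite \<Rightarrow> real"
  assumes t: "0 < t"
    and inU: "\<And>a b. 0 \<le> a \<Longrightarrow> a \<le> t \<Longrightarrow> 0 \<le> b \<Longrightarrow> b \<le> t \<Longrightarrow> x + a *\<^sub>R axis i 1 + b *\<^sub>R axis j 1 \<in> U"
    and dh: "\<And>y. y \<in> U \<Longrightarrow> h differentiable at y"
    and dph: "\<And>y. y \<in> U \<Longrightarrow> pd i h differentiable at y"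
  shows "\<exists>a b. 0 \<le> a \<and> a \<le> t \<and> 0 \<le> b \<and> b \<le> t \<and>
     h (x + t *\<^sub>R axis i 1 + t *\<^sub>R axis j 1) - h (x + t *\<^sub>R axis i 1) - h (x + t *\<^sub>R axis j 1) + h x
       = t * t * pd j (pd i h) (x + a *\<^sub>R axis i 1 + b *\<^sub>R axis j 1)"
proof -
  define ei where "ei = (axis i 1 :: real^'n)"
  define ej where "ej = (axis j 1 :: real^'n)"
  define \<phi> where "\<phi> u = h ((x + t *\<^sub>R ej) + u *\<^sub>R ei) - h (x + u *\<^sub>R ei)" for u
  have p1: "x + t *\<^sub>R ej + u *\<^sub>R ei = x + u *\<^sub>R ei + t *\<^sub>R ej" for u by (simp add: algebra_simps)
  have p0: "x + u *\<^sub>R ei = x + u *\<^sub>R ei + 0 *\<^sub>R ej" for u by simp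
  have "\<exists>z>0. z < t \<and> \<phi> t - \<phi> 0 = (t - 0) * (pd i h (x + t *\<^sub>R ej + z *\<^sub>R ei) - pd i h (x + z *\<^sub>R ei))"
  proof (rule MVT2[OF t])
    fix u :: real assume u: "0 \<le> u" "u \<le> t"
    have U1: "x + t *\<^sub>R ej + u *\<^sub>R ei \<in> U" using inU[of u t] u t by (simp add: ei_def ej_def algebra_simps)
    have U2: "x + u *\<^sub>R ei \<in> U" using inU[of u 0] u t p0 unfolding ei_def ej_def by auto
    show "(\<phi> has_real_derivative (pd i h (x + t *\<^sub>R ej + u *\<^sub>R ei) - pd i h (x + u *\<^sub>R ei))) (at u)"
      unfolding \<phi>_def ei_def
      by (intro DERIV_diff line_deriv_pd dh) (use U1 U2 in \<open>auto simp: ei_def\<close>)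
  qed
  then obtain z where z: "0 < z" "z < t"
    and ez: "\<phi> t - \<phi> 0 = t * (pd i h (x + t *\<^sub>R ej + z *\<^sub>R ei) - pd i h (x + z *\<^sub>R ei))" by auto
  define \<psi> where "\<psi> v = pd i h ((x + z *\<^sub>R ei) + v *\<^sub>R ej)" for v
  have "\<exists>w>0. w < t \<and> \<psi> t - \<psi> 0 = (t - 0) * pd j (pd i h) (x + z *\<^sub>R ei + w *\<^sub>R ej)"
  proof (rule MVT2[OF t])
    fix v :: real assume v: "0 \<le> v" "v \<le> t"
    have U1: "x + z *\<^sub>R ei + v *\<^sub>R ej \<in> U" using inU[of z v] v z unfolding ei_def ej_def by auto
    show "(\<psi> has_real_derivative pd j (pd i h) (x + z *\<^sub>R ei + v *\<^sub>R ej)) (at v)"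
      unfolding \<psi>_def ej_def
      by (intro line_deriv_pd dph) (use U1 in \<open>auto simp: ej_def\<close>)
  qed
  then obtain w where w: "0 < w" "w < t"
    and ew: "\<psi> t - \<psi> 0 = t * pd j (pd i h) (x + z *\<^sub>R ei + w *\<^sub>R ej)" by auto
  have "\<psi> t - \<psi> 0 = pd i h (x + t *\<^sub>R ej + z *\<^sub>R ei) - pd i h (x + z *\<^sub>R ei)"
    unfolding \<psi>_def by (simp add: algebra_simps)
  moreover have "\<phi> t - \<phi> 0 = h (x + t *\<^sub>R ei + t *\<^sub>R ej) - h (x + t *\<^sub>R ei) - h (x + t *\<^sub>R ej) + h x"
    unfolding \<phi>_def by (simp add: algebra_simps)
  ultimately have "h (x + t *\<^sub>R ei + t *\<^sub>R ej) - h (x + t *\<^sub>R ei) - h (x + t *\<^sub>R ej) + h x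
      = t * (t * pd j (pd i h) (x + z *\<^sub>R ei + w *\<^sub>R ej))"
    using ez ew by metis
  then have "h (x + t *\<^sub>R ei + t *\<^sub>R ej) - h (x + t *\<^sub>R ei) - h (x + t *\<^sub>R ej) + h x
      = t * t * pd j (pd i h) (x + z *\<^sub>R ei + w *\<^sub>R ej)"
    by (simp add: mult.assoc)
  then show ?thesis using z w unfolding ei_def ej_def
    by (intro exI[of _ z] exI[of _ w]) auto
qed

lemma norm_axis1: "norm (axis i (1::real) :: real^'n::finite) = 1"
  by (simp add: norm_axis_1)

lemma schwarz:
  fixes h :: "real^'n::finite \<Rightarrow> real"
  assumes U: "open U" "x \<in> U"
    and dh: "\<And>y. y \<in> U \<Longrightarrow> h differentiable at y"
    and dph: "\<And>y k. y \<in> U \<Longrightarrow> pd k h differentiable at y"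
    and c1: "continuous (at x) (pd j (pd i h))"
    and c2: "continuous (at x) (pd i (pd j h))"
  shows "pd j (pd i h) x = pd i (pd j h) x"
proof (rule ccontr)
  assume ne: "pd j (pd i h) x \<noteq> pd i (pd j h) x"
  define e where "e = \<bar>pd j (pd i h) x - pd i (pd j h) x\<bar> / 2"
  have e: "e > 0" using ne by (simp add: e_def)
  obtain r where r: "r > 0" "ball x r \<subseteq> U" using U open_contains_ball by blast
  obtain d1 where d1: "d1 > 0" "\<And>y. dist y x < d1 \<Longrightarrow> dist (pd j (pd i h) y) (pd j (pd i h) x) < e"
    using c1 e unfolding continuous_at_eps_delta by blast
  obtain d2 where d2: "d2 > 0" "\<And>y. dist y x < d2 \<Longrightarrow> dist (pd i (pd j h) y) (pd i (pd j h) x) < e"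
    using c2 e unfolding continuous_at_eps_delta by blast
  define t where "t = min r (min d1 d2) / 4"
  have t: "t > 0" "2 * t < r" "2 * t < d1" "2 * t < d2" using r d1 d2 by (auto simp: t_def)
  have nb: "dist (x + a *\<^sub>R axis k 1 + b *\<^sub>R axis l 1) x \<le> 2 * t"
    if "0 \<le> a" "a \<le> t" "0 \<le> b" "b \<le> t" for a b :: real and k l :: 'n
  proof -
    have "dist (x + a *\<^sub>R axis k 1 + b *\<^sub>R axis l 1) x = norm (a *\<^sub>R axis k 1 + b *\<^sub>R axis l 1 :: real^'n)"
      by (simp add: dist_norm add.assoc)
    also have "\<dots> \<le> norm (a *\<^sub>R (axis k 1 :: real^'n)) + norm (b *\<^sub>R (axis l 1 :: real^'n))"
      by (rule norm_triangle_ineq)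
    also have "\<dots> = \<bar>a\<bar> + \<bar>b\<bar>" by (simp add: norm_axis1)
    also have "\<dots> \<le> 2 * t" using that by simp
    finally show ?thesis .
  qed
  have inU: "x + a *\<^sub>R axis k 1 + b *\<^sub>R axis l 1 \<in> U"
    if "0 \<le> a" "a \<le> t" "0 \<le> b" "b \<le> t" for a b :: real and k l :: 'n
    using nb[OF that, of k l] t r(2) by (auto simp: dist_commute subset_iff)
  obtain a b where ab: "0 \<le> a" "a \<le> t" "0 \<le> b" "b \<le> t"
    and eq1: "h (x + t *\<^sub>R axis i 1 + t *\<^sub>R axis j 1) - h (x + t *\<^sub>R axis i 1) - h (x + t *\<^sub>R axis j 1) + h x
       = t * t * pd j (pd i h) (x + a *\<^sub>R axis i 1 + b *\<^sub>R axis j 1)"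
    using double_mvt[OF t(1) inU dh dph] by blast
  obtain a' b' where ab': "0 \<le> a'" "a' \<le> t" "0 \<le> b'" "b' \<le> t"
    and eq2: "h (x + t *\<^sub>R axis j 1 + t *\<^sub>R axis i 1) - h (x + t *\<^sub>R axis j 1) - h (x + t *\<^sub>R axis i 1) + h x
       = t * t * pd i (pd j h) (x + a' *\<^sub>R axis j 1 + b' *\<^sub>R axis i 1)"
    using double_mvt[OF t(1) inU dh dph] by blast
  have pe: "x + t *\<^sub>R axis j 1 + t *\<^sub>R axis i 1 = x + t *\<^sub>R axis i 1 + t *\<^sub>R axis j 1"
    by (simp add: algebra_simps)
  have eq2': "t * t * pd i (pd j h) (x + a' *\<^sub>R axis j 1 + b' *\<^sub>R axis i 1) =
     h (x + t *\<^sub>R axis i 1 + t *\<^sub>R axis j 1) - h (x + t *\<^sub>R axis j 1) - h (x + t *\<^sub>R axis i 1) + h x"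
    using eq2 unfolding pe by simp
  have "t * t * pd j (pd i h) (x + a *\<^sub>R axis i 1 + b *\<^sub>R axis j 1)
      = t * t * pd i (pd j h) (x + a' *\<^sub>R axis j 1 + b' *\<^sub>R axis i 1)"
    using eq1 eq2' by simp
  then have eqp: "pd j (pd i h) (x + a *\<^sub>R axis i 1 + b *\<^sub>R axis j 1)
      = pd i (pd j h) (x + a' *\<^sub>R axis j 1 + b' *\<^sub>R axis i 1)"
    using t(1) by simp
  have "dist (pd j (pd i h) (x + a *\<^sub>R axis i 1 + b *\<^sub>R axis j 1)) (pd j (pd i h) x) < e"
    using nb[OF ab, of i j] t by (intro d1(2)) linarith
  moreover have "dist (pd i (pd j h) (x + a' *\<^sub>R axis j 1 + b' *\<^sub>R axis i 1)) (pd i (pd j h) x) < e"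
    using nb[OF ab', of j i] t by (intro d2(2)) linarith
  ultimately have "\<bar>pd j (pd i h) x - pd i (pd j h) x\<bar> < 2 * e"
    using eqp by (simp add: dist_real_def)
  then show False by (simp add: e_def)
qed

lemma schwarz_sm:
  assumes "open U" "x \<in> U" "smooth_on U h"
  shows "pd j (pd i h) x = pd i (pd j h) x"
proof (rule schwarz[OF assms(1,2)])
  show "\<And>y. y \<in> U \<Longrightarrow> h differentiable at y" using assms(3) sm_diffat by blast
  show "\<And>y k. y \<in> U \<Longrightarrow> pd k h differentiable at y" using assms(3) sm_diffat sm_pd by blast
  show "continuous (at x) (pd j (pd i h))" "continuous (at x) (pd i (pd j h))"
    using assms sm_diffat sm_pd differentiable_imp_continuous_within by blast+
qed




lemma kr1: "(\<Sum>b\<in>(UNIV::'n::finite set). f b * (if b = j then 1 else 0)) = (f j::real)"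
proof -
  have "(\<Sum>b\<in>UNIV. f b * (if b = j then 1 else 0)) = (\<Sum>b\<in>UNIV. if b = j then f b else 0)"
    by (rule sum.cong) auto
  then show ?thesis by (simp add: sum.delta')
qed
lemma kr2: "(\<Sum>b\<in>(UNIV::'n::finite set). f b * (if j = b then 1 else 0)) = (f j::real)"
proof -
  have "(\<Sum>b\<in>UNIV. f b * (if j = b then 1 else 0)) = (\<Sum>b\<in>UNIV. if b = j then f b else 0)"
    by (rule sum.cong) auto
  then show ?thesis by (simp add: sum.delta')
qed
lemma kr3: "(\<Sum>b\<in>(UNIV::'n::finite set). (if b = j then 1 else 0) * f b) = (f j::real)"
  using kr1[of f j] by (simp add: mult.commute)
lemma kr4: "(\<Sum>b\<in>(UNIV::'n::finite set). (if j = b then 1 else 0) * f b) = (f j::real)"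
  using kr2[of f j] by (simp add: mult.commute)

lemmas kr = kr1 kr2 kr3 kr4

section \<open>The metric and its inverse\<close>

context
  fixes U :: "(real^'n::finite) set" and g :: "real^'n \<Rightarrow> real^'n^'n"
  assumes openU: "open U" and RM: "riemannian_metric_on U g"
begin

lemma g_sm: "smooth_on U (\<lambda>y. g y $ i $ j)"
  using RM by (simp add: riemannian_metric_on_def)

lemma g_sym: "y \<in> U \<Longrightarrow> g y $ i $ j = g y $ j $ i"
  using RM by (simp add: riemannian_metric_on_def)

lemma g_pd_sym: "y \<in> U \<Longrightarrow> pd k (\<lambda>z. g z $ i $ j) y = pd k (\<lambda>z. g z $ j $ i) y"
  by (rule pd_cong[OF openU]) (auto simp: g_sym)

lemma g_invertible: "y \<in> U \<Longrightarrow> invertible (g y)"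
proof -
  assume y: "y \<in> U"
  have "\<forall>v. g y *v v = 0 \<longrightarrow> v = 0"
  proof (intro allI impI)
    fix v assume "g y *v v = 0"
    then have "v \<bullet> (g y *v v) = 0" by simp
    then show "v = 0" using RM y unfolding riemannian_metric_on_def by force
  qed
  then have "inj ((*v) (g y))" by (simp add: vec.inj_iff_eq_0)
  then show ?thesis using matrix_left_invertible_injective invertible_left_inverse by blast
qed

lemma G_inv: "y \<in> U \<Longrightarrow> g y ** ginv g y = mat 1 \<and> ginv g y ** g y = mat 1"
  using g_invertible[of y] unfolding invertible_def ginv_def matrix_inv_def
  by (rule someI_ex)

lemma gG: "y \<in> U \<Longrightarrow> (\<Sum>k\<in>UNIV. g y $ i $ k * ginv g y $ k $ j) = (if i = j then 1 else 0)"
  using G_inv[of y] by (simp add: matrix_matrix_mult_def mat_def vec_eq_iff)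

lemma Gg: "y \<in> U \<Longrightarrow> (\<Sum>k\<in>UNIV. ginv g y $ i $ k * g y $ k $ j) = (if i = j then 1 else 0)"
  using G_inv[of y] by (simp add: matrix_matrix_mult_def mat_def vec_eq_iff)

lemma G_sym: "y \<in> U \<Longrightarrow> ginv g y $ i $ j = ginv g y $ j $ i"
proof -
  assume y: "y \<in> U"
  let ?G = "ginv g y" and ?g = "g y"
  have tg: "transpose ?g = ?g" using g_sym[OF y] by (simp add: transpose_def vec_eq_iff)
  have "transpose ?G ** ?g = mat 1"
  proof -
    have "transpose ?G ** ?g = transpose (transpose ?g ** ?G)"
      by (simp add: matrix_transpose_mul)
    also have "\<dots> = mat 1" using G_inv[OF y] tg by (simp add: transpose_mat)
    finally show ?thesis .
  qed
  then have "transpose ?G = ?G"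
  proof -
    assume a: "transpose ?G ** ?g = mat 1"
    have "transpose ?G = transpose ?G ** (?g ** ?G)" using G_inv[OF y] by (simp add: matrix_mul_rid)
    also have "\<dots> = (transpose ?G ** ?g) ** ?G" by (simp add: matrix_mul_assoc)
    also have "\<dots> = ?G" using a by (simp add: matrix_mul_lid)
    finally show ?thesis .
  qed
  then have "transpose ?G $ j $ i = ?G $ j $ i" by simp
  then show ?thesis by (simp add: transpose_def)
qed

lemma det_sm:
  assumes "\<And>a b. smooth_on U (\<lambda>y. M y $ a $ b)"
  shows "smooth_on U (\<lambda>y. det (M y :: real^'n^'n))"
  unfolding det_def
  by (intro sm_sum[OF openU] sm_mult[OF openU] sm_const[OF openU] sm_prod[OF openU] assms
        finite_permutations) auto

lemma G_cramer: "y \<in> U \<Longrightarrow> ginv g y $ k $ j =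
   det (\<chi> a b. if b = k then axis j 1 $ a else g y $ a $ b) / det (g y)"
proof -
  assume y: "y \<in> U"
  have d0: "det (g y) \<noteq> 0" using g_invertible[OF y] invertible_det_nz by blast
  have "g y *v (ginv g y *v axis j 1) = axis j 1"
    using G_inv[OF y] by (simp add: matrix_vector_mul_assoc)
  then have "ginv g y *v axis j 1 = (\<chi> k. det (\<chi> a b. if b = k then axis j 1 $ a else g y $ a $ b) / det (g y))"
    using cramer[OF d0] by blast
  then have "(ginv g y *v axis j 1) $ k = det (\<chi> a b. if b = k then axis j 1 $ a else g y $ a $ b) / det (g y)"
    by simp
  moreover have "(ginv g y *v axis j 1) $ k = ginv g y $ k $ j"
    by (simp add: matrix_vector_mult_def axis_def kr)
  ultimately show ?thesis by simp
qed

lemma G_sm: "smooth_on U (\<lambda>y. ginv g y $ k $ j)"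
proof -
  have "smooth_on U (\<lambda>y. det (\<chi> a b. if b = k then axis j 1 $ a else g y $ a $ b) / det (g y))"
  proof (rule sm_divide[OF openU])
    show "smooth_on U (\<lambda>y. det (\<chi> a b. if b = k then axis j 1 $ a else g y $ a $ b))"
    proof (rule det_sm)
      fix a b
      show "smooth_on U (\<lambda>y. (\<chi> a b. if b = k then axis j 1 $ a else g y $ a $ b) $ a $ b)"
        by (cases "b = k") (simp_all add: sm_const[OF openU] g_sm)
    qed
    show "smooth_on U (\<lambda>y. det (g y))" by (rule det_sm) (rule g_sm)
    show "\<And>y. y \<in> U \<Longrightarrow> det (g y) \<noteq> 0" using g_invertible invertible_det_nz by blast
  qed
  then show ?thesis
    by (rule sm_cong[OF openU, rotated]) (simp add: G_cramer)
qed

lemma christ_sm: "smooth_on U (christ g k i j)"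
  unfolding christ_def
  by (intro sm_mult[OF openU] sm_sumU[OF openU] sm_const[OF openU] sm_add[OF openU]
      sm_diff[OF openU] G_sm sm_pd g_sm)

lemma christ_sym: "y \<in> U \<Longrightarrow> christ g k i j y = christ g k j i y"
  unfolding christ_def using g_pd_sym[of y] by (simp add: algebra_simps)

lemma pd_christ_sym: "y \<in> U \<Longrightarrow> pd l (christ g k i j) y = pd l (christ g k j i) y"
  by (rule pd_cong[OF openU]) (auto simp: christ_sym)

end




lemma sum_swap_mult: "(\<Sum>a\<in>UNIV. (A a::real) * (\<Sum>e\<in>UNIV. B a e)) = (\<Sum>e\<in>UNIV. \<Sum>a\<in>UNIV. A a * B a e)"
  by (simp add: sum_distrib_left) (rule sum.swap)

lemma contr1:
  fixes A B :: "'n::finite \<Rightarrow> 'n \<Rightarrow> real"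
  assumes "\<And>i j. (\<Sum>a\<in>UNIV. A i a * B a j) = (if i = j then 1 else 0)"
  shows "(\<Sum>a\<in>UNIV. A i a * (\<Sum>e\<in>UNIV. B a e * F e)) = F i"
proof -
  have "(\<Sum>a\<in>UNIV. A i a * (\<Sum>e\<in>UNIV. B a e * F e)) = (\<Sum>e\<in>UNIV. \<Sum>a\<in>UNIV. A i a * (B a e * F e))"
    by (rule sum_swap_mult)
  also have "\<dots> = (\<Sum>e\<in>UNIV. (\<Sum>a\<in>UNIV. A i a * B a e) * F e)"
    by (simp add: sum_distrib_right mult.assoc)
  also have "\<dots> = F i" by (simp add: assms kr)
  finally show ?thesis .
qed

lemma contr2:
  fixes A B :: "'n::finite \<Rightarrow> 'n \<Rightarrow> real"
  assumes "\<And>i j. (\<Sum>a\<in>UNIV. A i a * B a j) = (if i = j then 1 else 0)"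
  shows "(\<Sum>e\<in>UNIV. (\<Sum>a\<in>UNIV. F a * A a e) * B e j) = F j"
proof -
  have "(\<Sum>e\<in>UNIV. (\<Sum>a\<in>UNIV. F a * A a e) * B e j) = (\<Sum>e\<in>UNIV. \<Sum>a\<in>UNIV. F a * (A a e * B e j))"
    by (simp add: sum_distrib_right mult.assoc)
  also have "\<dots> = (\<Sum>a\<in>UNIV. \<Sum>e\<in>UNIV. F a * (A a e * B e j))" by (rule sum.swap)
  also have "\<dots> = (\<Sum>a\<in>UNIV. F a * (\<Sum>e\<in>UNIV. A a e * B e j))"
    by (simp add: sum_distrib_left)
  also have "\<dots> = F j" by (simp add: assms kr)
  finally show ?thesis .
qed

section \<open>Derivatives of the metric and its inverse\<close>

context
  fixes U :: "(real^'n::finite) set" and g :: "real^'n \<Rightarrow> real^'n^'n"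
  assumes openU: "open U" and RM: "riemannian_metric_on U g"
begin

lemma dg: "y \<in> U \<Longrightarrow> (\<lambda>z. g z $ i $ j) differentiable at y"
  using sm_diffat g_sm[OF openU RM] by blast
lemma dG: "y \<in> U \<Longrightarrow> (\<lambda>z. ginv g z $ i $ j) differentiable at y"
  using sm_diffat G_sm[OF openU RM] by blast
lemma dchrist: "y \<in> U \<Longrightarrow> christ g k i j differentiable at y"
  using sm_diffat christ_sm[OF openU RM] by blast

lemma Gg': "y \<in> U \<Longrightarrow> (\<Sum>a\<in>UNIV. ginv g y $ i $ a * g y $ a $ j) = (if i = j then 1 else 0)"
  by (rule Gg[OF openU RM])
lemma gG': "y \<in> U \<Longrightarrow> (\<Sum>a\<in>UNIV. g y $ i $ a * ginv g y $ a $ j) = (if i = j then 1 else 0)"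
  by (rule gG[OF openU RM])

lemma pdG: assumes y: "y \<in> U"
  shows "pd k (\<lambda>z. ginv g z $ i $ j) y =
    - (\<Sum>c\<in>UNIV. (\<Sum>b\<in>UNIV. ginv g y $ i $ b * pd k (\<lambda>z. g z $ b $ c) y) * ginv g y $ c $ j)"
proof -
  have h1: "(\<Sum>b\<in>UNIV. pd k (\<lambda>z. ginv g z $ i $ b) y * g y $ b $ c)
        = - (\<Sum>b\<in>UNIV. ginv g y $ i $ b * pd k (\<lambda>z. g z $ b $ c) y)" for c
  proof -
    have "pd k (\<lambda>z. \<Sum>b\<in>UNIV. ginv g z $ i $ b * g z $ b $ c) y = pd k (\<lambda>z. if i = c then 1 else 0) y"
      by (rule pd_cong[OF openU y]) (simp add: Gg')
    also have "\<dots> = 0" by (rule pd_const)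
    finally have "pd k (\<lambda>z. \<Sum>b\<in>UNIV. ginv g z $ i $ b * g z $ b $ c) y = 0" .
    moreover have "pd k (\<lambda>z. \<Sum>b\<in>UNIV. ginv g z $ i $ b * g z $ b $ c) y
       = (\<Sum>b\<in>UNIV. ginv g y $ i $ b * pd k (\<lambda>z. g z $ b $ c) y + pd k (\<lambda>z. ginv g z $ i $ b) y * g y $ b $ c)"
      using y by (simp add: pd_sum pd_mult dg dG differentiable_mult)
    ultimately show ?thesis by (simp add: sum.distrib eq_neg_iff_add_eq_0 add.commute)
  qed
  have "pd k (\<lambda>z. ginv g z $ i $ j) y =
      (\<Sum>c\<in>UNIV. (\<Sum>b\<in>UNIV. pd k (\<lambda>z. ginv g z $ i $ b) y * g y $ b $ c) * ginv g y $ c $ j)"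
    by (rule contr2[symmetric]) (rule gG'[OF y])
  also have "\<dots> = - (\<Sum>c\<in>UNIV. (\<Sum>b\<in>UNIV. ginv g y $ i $ b * pd k (\<lambda>z. g z $ b $ c) y) * ginv g y $ c $ j)"
    by (simp add: h1 sum_negf)
  finally show ?thesis .
qed

lemma lower_christ: assumes y: "y \<in> U"
  shows "(\<Sum>e\<in>UNIV. g y $ a $ e * christ g e k b y) =
     (1/2) * (pd k (\<lambda>z. g z $ b $ a) y + pd b (\<lambda>z. g z $ k $ a) y - pd a (\<lambda>z. g z $ k $ b) y)"
proof -
  have "(\<Sum>e\<in>UNIV. g y $ a $ e * christ g e k b y) =
     (1/2) * (\<Sum>e\<in>UNIV. g y $ a $ e * (\<Sum>l\<in>UNIV. ginv g y $ e $ l *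
       (pd k (\<lambda>z. g z $ b $ l) y + pd b (\<lambda>z. g z $ k $ l) y - pd l (\<lambda>z. g z $ k $ b) y)))"
    by (simp add: christ_def sum_distrib_left mult_ac)
  also have "\<dots> = (1/2) * (pd k (\<lambda>z. g z $ b $ a) y + pd b (\<lambda>z. g z $ k $ a) y - pd a (\<lambda>z. g z $ k $ b) y)"
    by (subst contr1[where F="\<lambda>l. pd k (\<lambda>z. g z $ b $ l) y + pd b (\<lambda>z. g z $ k $ l) y - pd l (\<lambda>z. g z $ k $ b) y"])
       (use gG'[OF y] in auto)
  finally show ?thesis .
qed

lemma Dg: assumes y: "y \<in> U"
  shows "pd k (\<lambda>z. g z $ a $ b) y =
     (\<Sum>e\<in>UNIV. g y $ a $ e * christ g e k b y) + (\<Sum>e\<in>UNIV. g y $ b $ e * christ g e k a y)"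
  using g_pd_sym[OF openU RM y, of k a b] g_pd_sym[OF openU RM y, of a k b]
    g_pd_sym[OF openU RM y, of b k a]
  unfolding lower_christ[OF y] by (simp add: field_simps)

lemma DG: assumes y: "y \<in> U"
  shows "pd k (\<lambda>z. ginv g z $ i $ j) y =
     - (\<Sum>b\<in>UNIV. christ g i k b y * ginv g y $ b $ j) - (\<Sum>a\<in>UNIV. ginv g y $ i $ a * christ g j k a y)"
proof -
  let ?G = "\<lambda>a b. ginv g y $ a $ b" and ?g = "\<lambda>a b. g y $ a $ b" and ?C = "\<lambda>e a b. christ g e a b y"
  have "pd k (\<lambda>z. ginv g z $ i $ j) y =
    - (\<Sum>c\<in>UNIV. (\<Sum>b\<in>UNIV. ?G i b * ((\<Sum>e\<in>UNIV. ?g b e * ?C e k c) + (\<Sum>e\<in>UNIV. ?g c e * ?C e k b))) * ?G c j)"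
    by (simp add: pdG[OF y] Dg[OF y])
  also have "\<dots> = - (\<Sum>c\<in>UNIV. (\<Sum>b\<in>UNIV. ?G i b * (\<Sum>e\<in>UNIV. ?g b e * ?C e k c)) * ?G c j)
                  - (\<Sum>c\<in>UNIV. (\<Sum>b\<in>UNIV. ?G i b * (\<Sum>e\<in>UNIV. ?g c e * ?C e k b)) * ?G c j)"
    by (simp add: distrib_left distrib_right sum.distrib)
  also have "(\<Sum>c\<in>UNIV. (\<Sum>b\<in>UNIV. ?G i b * (\<Sum>e\<in>UNIV. ?g b e * ?C e k c)) * ?G c j)
      = (\<Sum>c\<in>UNIV. ?C i k c * ?G c j)"
    by (subst contr1[where F="\<lambda>e. ?C e k _"]) (use Gg'[OF y] in auto)
  also have "(\<Sum>c\<in>UNIV. (\<Sum>b\<in>UNIV. ?G i b * (\<Sum>e\<in>UNIV. ?g c e * ?C e k b)) * ?G c j)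
      = (\<Sum>b\<in>UNIV. ?G i b * (\<Sum>c\<in>UNIV. ?G j c * (\<Sum>e\<in>UNIV. ?g c e * ?C e k b)))"
  proof -
    have "(\<Sum>c\<in>UNIV. (\<Sum>b\<in>UNIV. ?G i b * (\<Sum>e\<in>UNIV. ?g c e * ?C e k b)) * ?G c j)
       = (\<Sum>c\<in>UNIV. \<Sum>b\<in>UNIV. ?G i b * (?G j c * (\<Sum>e\<in>UNIV. ?g c e * ?C e k b)))"
      using G_sym[OF openU RM y] by (simp add: sum_distrib_right sum_distrib_left mult_ac)
    also have "\<dots> = (\<Sum>b\<in>UNIV. \<Sum>c\<in>UNIV. ?G i b * (?G j c * (\<Sum>e\<in>UNIV. ?g c e * ?C e k b)))"
      by (rule sum.swap)
    also have "\<dots> = (\<Sum>b\<in>UNIV. ?G i b * (\<Sum>c\<in>UNIV. ?G j c * (\<Sum>e\<in>UNIV. ?g c e * ?C e k b)))"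
      by (simp add: sum_distrib_left)
    finally show ?thesis .
  qed
  also have "\<dots> = (\<Sum>b\<in>UNIV. ?G i b * ?C j k b)"
    by (subst contr1[where F="\<lambda>e. ?C e k _"]) (use Gg'[OF y] in auto)
  finally show ?thesis by simp
qed

end




definition cov :: "(real^'n::finite \<Rightarrow> real^'n^'n) \<Rightarrow> (real^'n \<Rightarrow> real^'n) \<Rightarrow> 'n \<Rightarrow> 'n \<Rightarrow> real^'n \<Rightarrow> real" where
  "cov g X j k y = pd j (\<lambda>z. X z $ k) y + (\<Sum>l\<in>UNIV. christ g k j l y * X y $ l)"

lemma cov_fun: "cov g X j k = (\<lambda>y. pd j (\<lambda>z. X z $ k) y + (\<Sum>l\<in>UNIV. christ g k j l y * X y $ l))"
  by (rule ext) (simp add: cov_def)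

lemma divv_fun: "divv g X = (\<lambda>y. (\<Sum>i\<in>UNIV. pd i (\<lambda>z. X z $ i) y) + (\<Sum>i\<in>UNIV. \<Sum>k\<in>UNIV. christ g i i k y * X y $ k))"
  by (rule ext) (simp add: divv_def)

lemma divv_cov: "divv g X y = (\<Sum>k\<in>UNIV. cov g X k k y)"
  by (simp add: divv_def cov_def sum.distrib)

lemma sum3_rot: "(\<Sum>a\<in>UNIV. \<Sum>b\<in>UNIV. \<Sum>c\<in>UNIV. (F a b c::real)) = (\<Sum>c\<in>UNIV. \<Sum>a\<in>UNIV. \<Sum>b\<in>UNIV. F a b c)"
proof -
  have "(\<Sum>a\<in>UNIV. \<Sum>b\<in>UNIV. \<Sum>c\<in>UNIV. F a b c) = (\<Sum>a\<in>UNIV. \<Sum>c\<in>UNIV. \<Sum>b\<in>UNIV. F a b c)"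
    by (rule sum.cong[OF refl]) (rule sum.swap)
  also have "\<dots> = (\<Sum>c\<in>UNIV. \<Sum>a\<in>UNIV. \<Sum>b\<in>UNIV. F a b c)" by (rule sum.swap)
  finally show ?thesis .
qed

context
  fixes U :: "(real^'n::finite) set" and g :: "real^'n \<Rightarrow> real^'n^'n"
  assumes openU: "open U" and RM: "riemannian_metric_on U g"
begin

lemma commute:
  assumes y: "y \<in> U" and X: "\<And>i. smooth_on U (\<lambda>z. X z $ i)"
  shows "(\<Sum>k\<in>UNIV. pd k (cov g X j k) y + (\<Sum>m\<in>UNIV. christ g k k m y * cov g X j m y)
            - (\<Sum>m\<in>UNIV. christ g m k j y * cov g X m k y)) - pd j (divv g X) y
         = (\<Sum>l\<in>UNIV. ricci g l j y * X y $ l)"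
proof -
  define \<Gamma> where "\<Gamma> a b c = christ g a b c y" for a b c
  define dX where "dX a b = pd a (\<lambda>z. X z $ b) y" for a b
  define ddX where "ddX a b c = pd a (pd b (\<lambda>z. X z $ c)) y" for a b c
  define d\<Gamma> where "d\<Gamma> d a b c = pd d (christ g a b c) y" for d a b c
  define Xv where "Xv l = X y $ l" for l
  have dXi: "\<And>i. (\<lambda>z. X z $ i) differentiable at y" using X y sm_diffat by blast
  have dpX: "\<And>i k. pd k (\<lambda>z. X z $ i) differentiable at y" using X y sm_diffat sm_pd by blast
  have dch: "\<And>a b c. christ g a b c differentiable at y" using dchrist[OF openU RM y] .
  have e1: "pd k (cov g X j k) y = ddX k j k + (\<Sum>l\<in>UNIV. \<Gamma> k j l * dX k l + d\<Gamma> k k j l * Xv l)" for k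
    unfolding cov_fun using dXi dpX dch
    by (simp add: pd_add pd_sum pd_mult differentiable_sum differentiable_mult ddX_def \<Gamma>_def dX_def d\<Gamma>_def Xv_def)
  have e2: "pd j (divv g X) y = (\<Sum>i\<in>UNIV. ddX j i i) + (\<Sum>i\<in>UNIV. \<Sum>l\<in>UNIV. \<Gamma> i i l * dX j l + d\<Gamma> j i i l * Xv l)"
    unfolding divv_fun using dXi dpX dch
    by (simp add: pd_add pd_sum pd_mult differentiable_sum differentiable_mult ddX_def \<Gamma>_def dX_def d\<Gamma>_def Xv_def)
  have e3: "cov g X a b y = dX a b + (\<Sum>l\<in>UNIV. \<Gamma> b a l * Xv l)" for a b
    by (simp add: cov_def \<Gamma>_def dX_def Xv_def)
  have ric: "ricci g l j y = (\<Sum>k\<in>UNIV. d\<Gamma> k k l j - d\<Gamma> j k l k + (\<Sum>m\<in>UNIV. \<Gamma> k k m * \<Gamma> m l j - \<Gamma> k j m * \<Gamma> m l k))" for l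
    by (simp add: ricci_def \<Gamma>_def d\<Gamma>_def)
  have sym: "\<Gamma> a b c = \<Gamma> a c b" for a b c using christ_sym[OF openU RM y] by (simp add: \<Gamma>_def)
  have dsym: "d\<Gamma> d a b c = d\<Gamma> d a c b" for d a b c using pd_christ_sym[OF openU RM y] by (simp add: d\<Gamma>_def)
  have schw: "ddX k j k = ddX j k k" for k
    unfolding ddX_def using schwarz_sm[OF openU y X] by simp
  define A1 where "A1 = (\<Sum>k\<in>UNIV. ddX k j k)"
  define A2 where "A2 = (\<Sum>k\<in>UNIV. \<Sum>l\<in>UNIV. d\<Gamma> k k j l * Xv l)"
  define A3 where "A3 = (\<Sum>k\<in>UNIV. \<Sum>l\<in>UNIV. \<Gamma> k j l * dX k l)"
  define A4 where "A4 = (\<Sum>k\<in>UNIV. \<Sum>m\<in>UNIV. \<Gamma> k k m * dX j m)"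
  define A5 where "A5 = (\<Sum>k\<in>UNIV. \<Sum>m\<in>UNIV. \<Sum>l\<in>UNIV. \<Gamma> k k m * (\<Gamma> m j l * Xv l))"
  define A6 where "A6 = (\<Sum>k\<in>UNIV. \<Sum>m\<in>UNIV. \<Gamma> m k j * dX m k)"
  define A7 where "A7 = (\<Sum>k\<in>UNIV. \<Sum>m\<in>UNIV. \<Sum>l\<in>UNIV. \<Gamma> m k j * (\<Gamma> k m l * Xv l))"
  define B1 where "B1 = (\<Sum>i\<in>UNIV. ddX j i i)"
  define B2 where "B2 = (\<Sum>i\<in>UNIV. \<Sum>l\<in>UNIV. d\<Gamma> j i i l * Xv l)"
  define B3 where "B3 = (\<Sum>i\<in>UNIV. \<Sum>l\<in>UNIV. \<Gamma> i i l * dX j l)"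
  define R1 where "R1 = (\<Sum>l\<in>UNIV. \<Sum>k\<in>UNIV. d\<Gamma> k k l j * Xv l)"
  define R2 where "R2 = (\<Sum>l\<in>UNIV. \<Sum>k\<in>UNIV. d\<Gamma> j k l k * Xv l)"
  define R3 where "R3 = (\<Sum>l\<in>UNIV. \<Sum>k\<in>UNIV. \<Sum>m\<in>UNIV. \<Gamma> k k m * \<Gamma> m l j * Xv l)"
  define R4 where "R4 = (\<Sum>l\<in>UNIV. \<Sum>k\<in>UNIV. \<Sum>m\<in>UNIV. \<Gamma> k j m * \<Gamma> m l k * Xv l)"
  have L: "(\<Sum>k\<in>UNIV. pd k (cov g X j k) y + (\<Sum>m\<in>UNIV. christ g k k m y * cov g X j m y)
            - (\<Sum>m\<in>UNIV. christ g m k j y * cov g X m k y)) - pd j (divv g X) y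
         = A1 + A2 + A3 + A4 + A5 - A6 - A7 - B1 - B2 - B3"
    unfolding e1 e2 e3 A1_def A2_def A3_def A4_def A5_def A6_def A7_def B1_def B2_def B3_def
    by (simp add: \<Gamma>_def[symmetric] sum.distrib sum_subtractf distrib_left sum_distrib_left right_diff_distrib)
  have R: "(\<Sum>l\<in>UNIV. ricci g l j y * X y $ l) = R1 - R2 + R3 - R4"
    unfolding ric R1_def R2_def R3_def R4_def Xv_def[symmetric]
    by (simp add: sum.distrib sum_subtractf sum_distrib_right left_diff_distrib distrib_right)
  have "A1 = B1" unfolding A1_def B1_def using schw by simp
  moreover have "A3 = A6"
  proof -
    have "A6 = (\<Sum>m\<in>UNIV. \<Sum>k\<in>UNIV. \<Gamma> m k j * dX m k)" unfolding A6_def by (rule sum.swap)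
    then show ?thesis unfolding A3_def using sym by simp
  qed
  moreover have "A4 = B3" unfolding A4_def B3_def ..
  moreover have "A2 = R1"
  proof -
    have "R1 = (\<Sum>k\<in>UNIV. \<Sum>l\<in>UNIV. d\<Gamma> k k l j * Xv l)" unfolding R1_def by (rule sum.swap)
    then show ?thesis unfolding A2_def using dsym by simp
  qed
  moreover have "B2 = R2"
  proof -
    have "R2 = (\<Sum>k\<in>UNIV. \<Sum>l\<in>UNIV. d\<Gamma> j k l k * Xv l)" unfolding R2_def by (rule sum.swap)
    then show ?thesis unfolding B2_def using dsym by simp
  qed
  moreover have "A5 = R3"
  proof -
    have "A5 = (\<Sum>l\<in>UNIV. \<Sum>k\<in>UNIV. \<Sum>m\<in>UNIV. \<Gamma> k k m * (\<Gamma> m j l * Xv l))"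
      unfolding A5_def by (rule sum3_rot)
    then show ?thesis unfolding R3_def using sym by (simp add: mult.assoc)
  qed
  moreover have "A7 = R4"
  proof -
    have "A7 = (\<Sum>l\<in>UNIV. \<Sum>k\<in>UNIV. \<Sum>m\<in>UNIV. \<Gamma> m k j * (\<Gamma> k m l * Xv l))"
      unfolding A7_def by (rule sum3_rot)
    also have "\<dots> = (\<Sum>l\<in>UNIV. \<Sum>m\<in>UNIV. \<Sum>k\<in>UNIV. \<Gamma> m k j * (\<Gamma> k m l * Xv l))"
      by (rule sum.cong[OF refl]) (rule sum.swap)
    also have "\<dots> = R4" unfolding R4_def using sym by (simp add: mult_ac)
    finally show ?thesis .
  qed
  ultimately show ?thesis using L R by simp
qed

end




section \<open>Divergence rules\<close>

lemma divv_cong: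
  assumes "open U" "y \<in> U" "\<And>z. z \<in> U \<Longrightarrow> X z = Y z"
  shows "divv g X y = divv g Y y"
proof -
  have "pd i (\<lambda>z. X z $ i) y = pd i (\<lambda>z. Y z $ i) y" for i
    by (rule pd_cong[OF assms(1,2)]) (simp add: assms(3))
  then show ?thesis using assms by (simp add: divv_def)
qed

lemma divv_scale:
  assumes "\<And>i. (\<lambda>z. X z $ i) differentiable at y" "\<phi> differentiable at y"
  shows "divv g (\<lambda>z. \<phi> z *\<^sub>R X z) y = \<phi> y * divv g X y + (\<Sum>k\<in>UNIV. pd k \<phi> y * X y $ k)"
  using assms by (simp add: divv_def pd_mult sum.distrib distrib_left sum_distrib_left mult_ac)

lemma divv_add:
  assumes "\<And>i. (\<lambda>z. X z $ i) differentiable at y" "\<And>i. (\<lambda>z. Y z $ i) differentiable at y"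
  shows "divv g (\<lambda>z. X z + Y z) y = divv g X y + divv g Y y"
  using assms by (simp add: divv_def pd_add sum.distrib distrib_left)

lemma divv_diff:
  assumes "\<And>i. (\<lambda>z. X z $ i) differentiable at y" "\<And>i. (\<lambda>z. Y z $ i) differentiable at y"
  shows "divv g (\<lambda>z. X z - Y z) y = divv g X y - divv g Y y"
  using assms by (simp add: divv_def pd_diff sum_subtractf right_diff_distrib)

context
  fixes U :: "(real^'n::finite) set" and g :: "real^'n \<Rightarrow> real^'n^'n"
  assumes openU: "open U" and RM: "riemannian_metric_on U g"
begin

lemma cov_sm: "(\<And>i. smooth_on U (\<lambda>z. X z $ i)) \<Longrightarrow> smooth_on U (cov g X j k)"
  unfolding cov_fun
  by (intro sm_add[OF openU] sm_sumU[OF openU] sm_mult[OF openU] sm_pd christ_sm[OF openU RM]) auto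

lemma sharp_flat: "y \<in> U \<Longrightarrow> sharp g (flat g E) y = E y"
  unfolding sharp_def flat_def vec_eq_iff
  using contr1[of "\<lambda>a b. ginv g y $ a $ b" "\<lambda>a b. g y $ a $ b"] Gg[OF openU RM]
  by simp

lemma ginner_sharp: assumes y: "y \<in> U"
  shows "ginner g y (sharp g w y) v = (\<Sum>k\<in>UNIV. w y $ k * v $ k)"
proof -
  have "ginner g y (sharp g w y) v = (\<Sum>j\<in>UNIV. (\<Sum>i\<in>UNIV. (\<Sum>d\<in>UNIV. w y $ d * ginv g y $ d $ i) * g y $ i $ j) * v $ j)"
    unfolding ginner_def sharp_def using G_sym[OF openU RM y]
    by (subst sum.swap) (simp add: sum_distrib_left sum_distrib_right mult_ac)
  also have "\<dots> = (\<Sum>k\<in>UNIV. w y $ k * v $ k)"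
    using contr2[of "\<lambda>a b. ginv g y $ a $ b" "\<lambda>a b. g y $ a $ b"] Gg[OF openU RM y] by simp
  finally show ?thesis .
qed

lemma grad_comp: "grad g f z $ k = (\<Sum>d\<in>UNIV. ginv g z $ k $ d * pd d f z)"
  by (simp add: grad_def sharp_def dif_def)

lemma cov_grad:
  assumes y: "y \<in> U" and f: "smooth_on U f"
  shows "cov g (grad g f) j k y = (\<Sum>d\<in>UNIV. ginv g y $ k $ d * hess g f j d y)"
proof -
  define \<Gamma> where "\<Gamma> a b c = christ g a b c y" for a b c
  define G where "G a b = ginv g y $ a $ b" for a b
  define df where "df a = pd a f y" for a
  define ddf where "ddf a b = pd a (pd b f) y" for a b
  have dG': "\<And>a b. (\<lambda>z. ginv g z $ a $ b) differentiable at y" using dG[OF openU RM y] .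
  have df': "\<And>a. pd a f differentiable at y" using f y sm_diffat sm_pd by blast
  have e1: "pd j (\<lambda>z. grad g f z $ k) y = (\<Sum>d\<in>UNIV. G k d * ddf j d)
     - (\<Sum>d\<in>UNIV. \<Sum>b\<in>UNIV. \<Gamma> k j b * G b d * df d) - (\<Sum>d\<in>UNIV. \<Sum>a\<in>UNIV. G k a * \<Gamma> d j a * df d)"
    unfolding grad_comp using dG' df'
    by (simp add: pd_sum pd_mult differentiable_mult DG[OF openU RM y] sum.distrib
        sum_subtractf sum_negf distrib_right left_diff_distrib sum_distrib_right G_def \<Gamma>_def df_def ddf_def)
  have e2: "cov g (grad g f) j k y = pd j (\<lambda>z. grad g f z $ k) y + (\<Sum>l\<in>UNIV. \<Gamma> k j l * (\<Sum>d\<in>UNIV. G l d * df d))"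
    by (simp add: cov_def grad_comp \<Gamma>_def G_def df_def)
  have e3: "(\<Sum>l\<in>UNIV. \<Gamma> k j l * (\<Sum>d\<in>UNIV. G l d * df d)) = (\<Sum>d\<in>UNIV. \<Sum>b\<in>UNIV. \<Gamma> k j b * G b d * df d)"
    by (subst sum_swap_mult) (simp add: mult_ac)
  have e4: "(\<Sum>d\<in>UNIV. ginv g y $ k $ d * hess g f j d y) = (\<Sum>d\<in>UNIV. G k d * ddf j d)
     - (\<Sum>d\<in>UNIV. \<Sum>a\<in>UNIV. G k a * \<Gamma> d j a * df d)"
  proof -
    have "(\<Sum>d\<in>UNIV. ginv g y $ k $ d * hess g f j d y) = (\<Sum>d\<in>UNIV. G k d * ddf j d)
       - (\<Sum>a\<in>UNIV. G k a * (\<Sum>d\<in>UNIV. \<Gamma> d j a * df d))"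
      by (simp add: hess_def G_def ddf_def \<Gamma>_def df_def right_diff_distrib sum_subtractf)
    also have "(\<Sum>a\<in>UNIV. G k a * (\<Sum>d\<in>UNIV. \<Gamma> d j a * df d)) = (\<Sum>d\<in>UNIV. \<Sum>a\<in>UNIV. G k a * \<Gamma> d j a * df d)"
      by (subst sum_swap_mult) (simp add: mult_ac)
    finally show ?thesis .
  qed
  show ?thesis unfolding e2 e1 e3 e4 by simp
qed

lemma metric_compat:
  assumes y: "y \<in> U" and X: "\<And>i. (\<lambda>z. X z $ i) differentiable at y"
    and Y: "\<And>i. (\<lambda>z. Y z $ i) differentiable at y"
  shows "pd j (\<lambda>z. ginner g z (X z) (Y z)) y =
    (\<Sum>a\<in>UNIV. \<Sum>b\<in>UNIV. g y $ a $ b * (cov g X j a y * Y y $ b + X y $ a * cov g Y j b y))"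
proof -
  define \<Gamma> where "\<Gamma> a b c = christ g a b c y" for a b c
  define gg where "gg a b = g y $ a $ b" for a b
  define dX where "dX a = pd j (\<lambda>z. X z $ a) y" for a
  define dY where "dY a = pd j (\<lambda>z. Y z $ a) y" for a
  define Xv where "Xv a = X y $ a" for a
  define Yv where "Yv a = Y y $ a" for a
  have dg': "\<And>a b. (\<lambda>z. g z $ a $ b) differentiable at y" using dg[OF openU RM y] .
  define P1 where "P1 = (\<Sum>a\<in>UNIV. \<Sum>b\<in>UNIV. gg a b * Xv a * dY b)"
  define P2 where "P2 = (\<Sum>a\<in>UNIV. \<Sum>b\<in>UNIV. gg a b * dX a * Yv b)"
  define P3 where "P3 = (\<Sum>a\<in>UNIV. \<Sum>l\<in>UNIV. \<Sum>b\<in>UNIV. gg a b * \<Gamma> b j l * Xv a * Yv l)"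
  define P4 where "P4 = (\<Sum>l\<in>UNIV. \<Sum>b\<in>UNIV. \<Sum>a\<in>UNIV. gg b a * \<Gamma> a j l * Xv l * Yv b)"
  have L: "pd j (\<lambda>z. ginner g z (X z) (Y z)) y = P1 + P2 + P3 + P4"
    unfolding ginner_def P1_def P2_def P3_def P4_def using X Y dg'
    by (simp add: pd_sum pd_mult differentiable_mult differentiable_sum Dg[OF openU RM y]
        sum.distrib distrib_left distrib_right sum_distrib_left sum_distrib_right
        \<Gamma>_def gg_def dX_def dY_def Xv_def Yv_def mult_ac)
  have Q3: "(\<Sum>a\<in>UNIV. \<Sum>b\<in>UNIV. gg a b * (Xv a * (\<Sum>l\<in>UNIV. \<Gamma> b j l * Yv l))) = P3"
  proof -
    have "(\<Sum>a\<in>UNIV. \<Sum>b\<in>UNIV. gg a b * (Xv a * (\<Sum>l\<in>UNIV. \<Gamma> b j l * Yv l)))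
        = (\<Sum>a\<in>UNIV. \<Sum>b\<in>UNIV. \<Sum>l\<in>UNIV. gg a b * \<Gamma> b j l * Xv a * Yv l)"
      by (simp add: sum_distrib_left mult_ac)
    also have "\<dots> = P3" unfolding P3_def
      by (rule sum.cong[OF refl]) (rule sum.swap)
    finally show ?thesis .
  qed
  have Q4: "(\<Sum>a\<in>UNIV. \<Sum>b\<in>UNIV. gg a b * ((\<Sum>l\<in>UNIV. \<Gamma> a j l * Xv l) * Yv b)) = P4"
  proof -
    have "(\<Sum>a\<in>UNIV. \<Sum>b\<in>UNIV. gg a b * ((\<Sum>l\<in>UNIV. \<Gamma> a j l * Xv l) * Yv b))
        = (\<Sum>a\<in>UNIV. \<Sum>b\<in>UNIV. \<Sum>l\<in>UNIV. gg b a * \<Gamma> a j l * Xv l * Yv b)"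
      using g_sym[OF openU RM y] by (simp add: gg_def sum_distrib_left sum_distrib_right mult_ac)
    also have "\<dots> = (\<Sum>l\<in>UNIV. \<Sum>a\<in>UNIV. \<Sum>b\<in>UNIV. gg b a * \<Gamma> a j l * Xv l * Yv b)"
      by (rule sum3_rot)
    also have "\<dots> = P4" unfolding P4_def
      by (rule sum.cong[OF refl]) (rule sum.swap)
    finally show ?thesis .
  qed
  have R: "(\<Sum>a\<in>UNIV. \<Sum>b\<in>UNIV. g y $ a $ b * (cov g X j a y * Y y $ b + X y $ a * cov g Y j b y))
     = P2 + (\<Sum>a\<in>UNIV. \<Sum>b\<in>UNIV. gg a b * ((\<Sum>l\<in>UNIV. \<Gamma> a j l * Xv l) * Yv b))
       + P1 + (\<Sum>a\<in>UNIV. \<Sum>b\<in>UNIV. gg a b * (Xv a * (\<Sum>l\<in>UNIV. \<Gamma> b j l * Yv l)))"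
    unfolding P1_def P2_def
    by (simp add: cov_def sum.distrib distrib_left distrib_right \<Gamma>_def gg_def dX_def dY_def Xv_def Yv_def mult_ac)
  show ?thesis unfolding L R Q3 Q4 by simp
qed

lemma divv_nabla:
  assumes y: "y \<in> U" and X: "\<And>i. smooth_on U (\<lambda>z. X z $ i)"
  shows "divv g (\<lambda>z. \<chi> k. \<Sum>j\<in>UNIV. X z $ j * cov g X j k z) y =
     (\<Sum>j\<in>UNIV. \<Sum>k\<in>UNIV. cov g X k j y * cov g X j k y)
     + (\<Sum>j\<in>UNIV. X y $ j * (\<Sum>k\<in>UNIV. pd k (cov g X j k) y + (\<Sum>m\<in>UNIV. christ g k k m y * cov g X j m y)
            - (\<Sum>m\<in>UNIV. christ g m k j y * cov g X m k y)))"
proof -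
  define \<Gamma> where "\<Gamma> a b c = christ g a b c y" for a b c
  define C where "C a b = cov g X a b y" for a b
  define dC where "dC k a b = pd k (cov g X a b) y" for k a b
  define Xv where "Xv a = X y $ a" for a
  have dXi: "\<And>i. (\<lambda>z. X z $ i) differentiable at y" using X y sm_diffat by blast
  have dC': "\<And>a b. cov g X a b differentiable at y" using cov_sm[OF X] y sm_diffat by blast
  have pX: "pd k (\<lambda>z. X z $ j) y = C k j - (\<Sum>l\<in>UNIV. \<Gamma> j k l * Xv l)" for k j
    by (simp add: C_def cov_def \<Gamma>_def Xv_def)
  have L: "divv g (\<lambda>z. \<chi> k. \<Sum>j\<in>UNIV. X z $ j * cov g X j k z) y =
     (\<Sum>k\<in>UNIV. \<Sum>j\<in>UNIV. Xv j * dC k j k) + (\<Sum>k\<in>UNIV. \<Sum>j\<in>UNIV. C k j * C j k)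
     - (\<Sum>k\<in>UNIV. \<Sum>j\<in>UNIV. \<Sum>l\<in>UNIV. \<Gamma> j k l * Xv l * C j k)
     + (\<Sum>k\<in>UNIV. \<Sum>m\<in>UNIV. \<Sum>j\<in>UNIV. \<Gamma> k k m * (Xv j * C j m))"
    unfolding divv_def using dXi dC'
    by (simp add: pd_sum pd_mult differentiable_mult pX sum.distrib sum_subtractf
        left_diff_distrib right_diff_distrib sum_distrib_right sum_distrib_left C_def dC_def Xv_def \<Gamma>_def mult_ac)
  have R: "(\<Sum>j\<in>UNIV. \<Sum>k\<in>UNIV. cov g X k j y * cov g X j k y)
     + (\<Sum>j\<in>UNIV. X y $ j * (\<Sum>k\<in>UNIV. pd k (cov g X j k) y + (\<Sum>m\<in>UNIV. christ g k k m y * cov g X j m y)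
            - (\<Sum>m\<in>UNIV. christ g m k j y * cov g X m k y)))
     = (\<Sum>j\<in>UNIV. \<Sum>k\<in>UNIV. C k j * C j k) + (\<Sum>j\<in>UNIV. \<Sum>k\<in>UNIV. Xv j * dC k j k)
       + (\<Sum>j\<in>UNIV. \<Sum>k\<in>UNIV. \<Sum>m\<in>UNIV. \<Gamma> k k m * (Xv j * C j m))
       - (\<Sum>j\<in>UNIV. \<Sum>k\<in>UNIV. \<Sum>m\<in>UNIV. \<Gamma> m k j * Xv j * C m k)"
    by (simp add: sum.distrib sum_subtractf right_diff_distrib distrib_left sum_distrib_left
        C_def dC_def Xv_def \<Gamma>_def mult_ac)
  have s1: "(\<Sum>k\<in>UNIV. \<Sum>j\<in>UNIV. Xv j * dC k j k) = (\<Sum>j\<in>UNIV. \<Sum>k\<in>UNIV. Xv j * dC k j k)"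
    by (rule sum.swap)
  have s2: "(\<Sum>k\<in>UNIV. \<Sum>j\<in>UNIV. C k j * C j k) = (\<Sum>j\<in>UNIV. \<Sum>k\<in>UNIV. C k j * C j k)"
    by (rule sum.swap)
  have s3: "(\<Sum>k\<in>UNIV. \<Sum>m\<in>UNIV. \<Sum>j\<in>UNIV. \<Gamma> k k m * (Xv j * C j m))
     = (\<Sum>j\<in>UNIV. \<Sum>k\<in>UNIV. \<Sum>m\<in>UNIV. \<Gamma> k k m * (Xv j * C j m))"
    by (rule sum3_rot)
  have s4: "(\<Sum>k\<in>UNIV. \<Sum>j\<in>UNIV. \<Sum>l\<in>UNIV. \<Gamma> j k l * Xv l * C j k)
     = (\<Sum>j\<in>UNIV. \<Sum>k\<in>UNIV. \<Sum>m\<in>UNIV. \<Gamma> m k j * Xv j * C m k)"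
    by (rule sum3_rot)
  show ?thesis unfolding L R s1 s2 s3 s4 by simp
qed

end




lemma sharp_mv: "sharp g w y = ginv g y *v w y"
  by (simp add: sharp_def matrix_vector_mult_def)

context
  fixes U :: "(real^'n::finite) set" and g :: "real^'n \<Rightarrow> real^'n^'n"
  assumes openU: "open U" and RM: "riemannian_metric_on U g"
begin

lemma hess_sym: "y \<in> U \<Longrightarrow> smooth_on U f \<Longrightarrow> hess g f i j y = hess g f j i y"
  unfolding hess_def using schwarz_sm[OF openU, of y f i j] christ_sym[OF openU RM, of y]
  by simp

lemma grad_sm: "smooth_on U f \<Longrightarrow> smooth_on U (\<lambda>z. grad g f z $ k)"
  unfolding grad_comp[OF openU RM]
  by (intro sm_sumU[OF openU] sm_mult[OF openU] G_sm[OF openU RM] sm_pd)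

lemma cov_grad_low: assumes y: "y \<in> U" and f: "smooth_on U f"
  shows "(\<Sum>b\<in>UNIV. g y $ a $ b * cov g (grad g f) j b y) = hess g f j a y"
  unfolding cov_grad[OF openU RM y f]
  using contr1[of "\<lambda>a b. g y $ a $ b" "\<lambda>a b. ginv g y $ a $ b" a "\<lambda>d. hess g f j d y"] gG[OF openU RM y]
  by simp

lemma dQ: assumes y: "y \<in> U" and f: "smooth_on U f"
  shows "pd j (\<lambda>z. ginner g z (grad g f z) (grad g f z)) y = 2 * (\<Sum>a\<in>UNIV. grad g f y $ a * hess g f j a y)"
proof -
  let ?X = "grad g f"
  have dX: "\<And>i. (\<lambda>z. ?X z $ i) differentiable at y" using grad_sm[OF f] y sm_diffat by blast
  have "pd j (\<lambda>z. ginner g z (?X z) (?X z)) y =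
    (\<Sum>a\<in>UNIV. \<Sum>b\<in>UNIV. g y $ a $ b * cov g ?X j a y * ?X y $ b) +
    (\<Sum>a\<in>UNIV. \<Sum>b\<in>UNIV. ?X y $ a * (g y $ a $ b * cov g ?X j b y))"
    unfolding metric_compat[OF openU RM y dX dX]
    by (simp add: distrib_left sum.distrib mult_ac)
  also have "(\<Sum>a\<in>UNIV. \<Sum>b\<in>UNIV. g y $ a $ b * cov g ?X j a y * ?X y $ b)
      = (\<Sum>b\<in>UNIV. ?X y $ b * (\<Sum>a\<in>UNIV. g y $ b $ a * cov g ?X j a y))"
    using g_sym[OF openU RM y] by (subst sum.swap) (simp add: sum_distrib_left mult_ac)
  also have "(\<Sum>a\<in>UNIV. \<Sum>b\<in>UNIV. ?X y $ a * (g y $ a $ b * cov g ?X j b y))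
      = (\<Sum>a\<in>UNIV. ?X y $ a * (\<Sum>b\<in>UNIV. g y $ a $ b * cov g ?X j b y))"
    by (simp add: sum_distrib_left)
  finally show ?thesis using cov_grad_low[OF y f] by simp
qed

lemma sharp_dQ: assumes y: "y \<in> U" and f: "smooth_on U f"
  shows "sharp g (dif (\<lambda>z. ginner g z (grad g f z) (grad g f z))) y =
     2 *\<^sub>R (\<chi> k. \<Sum>j\<in>UNIV. grad g f y $ j * cov g (grad g f) j k y)"
proof -
  have "(\<Sum>j\<in>UNIV. ginv g y $ i $ j * (2 * (\<Sum>a\<in>UNIV. grad g f y $ a * hess g f j a y)))
      = 2 * (\<Sum>a\<in>UNIV. grad g f y $ a * cov g (grad g f) a i y)" for i
  proof -
    have "(\<Sum>j\<in>UNIV. ginv g y $ i $ j * (2 * (\<Sum>a\<in>UNIV. grad g f y $ a * hess g f j a y)))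
       = 2 * (\<Sum>a\<in>UNIV. \<Sum>j\<in>UNIV. grad g f y $ a * (ginv g y $ i $ j * hess g f a j y))"
      using hess_sym[OF y f]
      by (subst sum.swap) (simp add: sum_distrib_left mult_ac)
    also have "\<dots> = 2 * (\<Sum>a\<in>UNIV. grad g f y $ a * cov g (grad g f) a i y)"
      by (simp add: cov_grad[OF openU RM y f] sum_distrib_left)
    finally show ?thesis .
  qed
  then show ?thesis
    by (simp add: sharp_def dif_def dQ[OF y f] vec_eq_iff)
qed

end




definition tp :: "(real^'n::finite \<Rightarrow> real^'n^'n) \<Rightarrow> real^'n \<Rightarrow> ('n \<Rightarrow> 'n \<Rightarrow> real) \<Rightarrow> ('n \<Rightarrow> 'n \<Rightarrow> real) \<Rightarrow> real" where
  "tp g y S T = (\<Sum>i\<in>UNIV. \<Sum>j\<in>UNIV. \<Sum>a\<in>UNIV. \<Sum>b\<in>UNIV. ginv g y $ i $ a * ginv g y $ j $ b * S i j * T a b)"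

lemma tnorm2_tp: "tnorm2 g T y = tp g y (\<lambda>i j. T i j y) (\<lambda>i j. T i j y)"
  by (simp add: tnorm2_def tp_def)

lemma tp_add1: "tp g y (\<lambda>i j. S1 i j + S2 i j) T = tp g y S1 T + tp g y S2 T"
  by (simp add: tp_def distrib_left distrib_right sum.distrib)
lemma tp_add2: "tp g y T (\<lambda>i j. S1 i j + S2 i j) = tp g y T S1 + tp g y T S2"
  by (simp add: tp_def distrib_left distrib_right sum.distrib)
lemma tp_scale1: "tp g y (\<lambda>i j. c * S i j) T = c * tp g y S T"
  by (simp add: tp_def sum_distrib_left mult_ac)
lemma tp_scale2: "tp g y T (\<lambda>i j. c * S i j) = c * tp g y T S"
  by (simp add: tp_def sum_distrib_left mult_ac)

lemma sum4_rot: "(\<Sum>a\<in>UNIV. \<Sum>b\<in>UNIV. \<Sum>c\<in>UNIV. \<Sum>d\<in>UNIV. (F a b c d::real)) = (\<Sum>b\<in>UNIV. \<Sum>c\<in>UNIV. \<Sum>d\<in>UNIV. \<Sum>a\<in>UNIV. F a b c d)"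
proof -
  have "(\<Sum>a\<in>UNIV. \<Sum>b\<in>UNIV. \<Sum>c\<in>UNIV. \<Sum>d\<in>UNIV. F a b c d) = (\<Sum>b\<in>UNIV. \<Sum>a\<in>UNIV. \<Sum>c\<in>UNIV. \<Sum>d\<in>UNIV. F a b c d)"
    by (rule sum.swap)
  also have "\<dots> = (\<Sum>b\<in>UNIV. \<Sum>c\<in>UNIV. \<Sum>a\<in>UNIV. \<Sum>d\<in>UNIV. F a b c d)"
    by (rule sum.cong[OF refl]) (rule sum.swap)
  also have "\<dots> = (\<Sum>b\<in>UNIV. \<Sum>c\<in>UNIV. \<Sum>d\<in>UNIV. \<Sum>a\<in>UNIV. F a b c d)"
    by (rule sum.cong[OF refl], rule sum.cong[OF refl]) (rule sum.swap)
  finally show ?thesis .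
qed

definition trG :: "(real^'n::finite \<Rightarrow> real^'n^'n) \<Rightarrow> real^'n \<Rightarrow> ('n \<Rightarrow> 'n \<Rightarrow> real) \<Rightarrow> real" where
  "trG g y S = (\<Sum>i\<in>UNIV. \<Sum>j\<in>UNIV. ginv g y $ i $ j * S i j)"

context
  fixes U :: "(real^'n::finite) set" and g :: "real^'n \<Rightarrow> real^'n^'n"
  assumes openU: "open U" and RM: "riemannian_metric_on U g"
begin


lemma tp_g2: assumes y: "y \<in> U" shows "tp g y S (\<lambda>i j. g y $ i $ j) = trG g y S"
proof -
  have "tp g y S (\<lambda>i j. g y $ i $ j) = (\<Sum>i\<in>UNIV. \<Sum>j\<in>UNIV. S i j * (\<Sum>a\<in>UNIV. ginv g y $ i $ a * (\<Sum>b\<in>UNIV. g y $ a $ b * ginv g y $ b $ j)))"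
    unfolding tp_def using G_sym[OF openU RM y]
    by (simp add: sum_distrib_left mult_ac)
  also have "\<dots> = trG g y S" unfolding trG_def
    using contr1[of "\<lambda>a b. ginv g y $ a $ b" "\<lambda>a b. g y $ a $ b", OF Gg[OF openU RM y]]
    by (simp add: gG[OF openU RM y] kr mult_ac)
  finally show ?thesis .
qed

lemma tp_g1: assumes y: "y \<in> U" shows "tp g y (\<lambda>i j. g y $ i $ j) S = trG g y S"
proof -
  let ?T = "\<lambda>i j a b. ginv g y $ i $ a * ginv g y $ j $ b * g y $ i $ j * S a b"
  have "tp g y (\<lambda>i j. g y $ i $ j) S = (\<Sum>i\<in>UNIV. \<Sum>j\<in>UNIV. \<Sum>a\<in>UNIV. \<Sum>b\<in>UNIV. ?T i j a b)"
    unfolding tp_def ..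
  also have "\<dots> = (\<Sum>j\<in>UNIV. \<Sum>a\<in>UNIV. \<Sum>b\<in>UNIV. \<Sum>i\<in>UNIV. ?T i j a b)"
    by (rule sum4_rot)
  also have "\<dots> = (\<Sum>a\<in>UNIV. \<Sum>b\<in>UNIV. \<Sum>i\<in>UNIV. \<Sum>j\<in>UNIV. ?T i j a b)"
    by (rule sum4_rot)
  also have "\<dots> = tp g y S (\<lambda>i j. g y $ i $ j)"
    unfolding tp_def using G_sym[OF openU RM y] by (simp add: mult_ac)
  finally show ?thesis using tp_g2[OF y] by simp
qed

lemma tp_comm: assumes y: "y \<in> U" shows "tp g y S T = tp g y T S"
proof -
  let ?T = "\<lambda>i j a b. ginv g y $ i $ a * ginv g y $ j $ b * S i j * T a b"
  have "tp g y S T = (\<Sum>i\<in>UNIV. \<Sum>j\<in>UNIV. \<Sum>a\<in>UNIV. \<Sum>b\<in>UNIV. ?T i j a b)"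
    unfolding tp_def ..
  also have "\<dots> = (\<Sum>j\<in>UNIV. \<Sum>a\<in>UNIV. \<Sum>b\<in>UNIV. \<Sum>i\<in>UNIV. ?T i j a b)"
    by (rule sum4_rot)
  also have "\<dots> = (\<Sum>a\<in>UNIV. \<Sum>b\<in>UNIV. \<Sum>i\<in>UNIV. \<Sum>j\<in>UNIV. ?T i j a b)"
    by (rule sum4_rot)
  also have "\<dots> = tp g y T S"
    unfolding tp_def using G_sym[OF openU RM y] by (simp add: mult_ac)
  finally show ?thesis .
qed

lemma Gb: assumes y: "y \<in> U" shows "(\<Sum>a\<in>UNIV. ginv g y $ i $ a * flat g E y $ a) = E y $ i"
  using sharp_flat[OF openU RM y, of E] by (simp add: sharp_def vec_eq_iff)

lemma tp_bb2: assumes y: "y \<in> U"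
  shows "tp g y S (\<lambda>i j. flat g E y $ i * flat g E y $ j) = (\<Sum>i\<in>UNIV. \<Sum>j\<in>UNIV. S i j * E y $ i * E y $ j)"
proof -
  have "(\<Sum>i\<in>UNIV. \<Sum>j\<in>UNIV. S i j * E y $ i * E y $ j) =
     (\<Sum>i\<in>UNIV. \<Sum>j\<in>UNIV. S i j * (\<Sum>a\<in>UNIV. ginv g y $ i $ a * flat g E y $ a) * (\<Sum>b\<in>UNIV. ginv g y $ j $ b * flat g E y $ b))"
    by (simp add: Gb[OF y])
  also have "\<dots> = tp g y S (\<lambda>i j. flat g E y $ i * flat g E y $ j)"
    unfolding tp_def by (simp add: sum_distrib_left sum_distrib_right mult_ac)
  finally show ?thesis by simp
qed

lemma tp_bb1: assumes y: "y \<in> U"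
  shows "tp g y (\<lambda>i j. flat g E y $ i * flat g E y $ j) S = (\<Sum>i\<in>UNIV. \<Sum>j\<in>UNIV. S i j * E y $ i * E y $ j)"
  using tp_comm[OF y] tp_bb2[OF y] by simp

lemma trG_g: assumes y: "y \<in> U" shows "trG g y (\<lambda>i j. g y $ i $ j) = real CARD('n)"
proof -
  have "trG g y (\<lambda>i j. g y $ i $ j) = (\<Sum>i\<in>UNIV. \<Sum>j\<in>UNIV. ginv g y $ i $ j * g y $ j $ i)"
    unfolding trG_def using g_sym[OF openU RM y] by simp
  also have "\<dots> = (\<Sum>i\<in>(UNIV::'n set). 1)" by (simp add: Gg[OF openU RM y])
  finally show ?thesis by simp
qed

lemma bE_E2: assumes y: "y \<in> U"
  shows "(\<Sum>j\<in>UNIV. flat g E y $ j * E y $ j) = ginner g y (E y) (E y)"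
  unfolding ginner_def flat_def using g_sym[OF openU RM y]
  by (subst sum.swap) (simp add: sum_distrib_right sum_distrib_left mult_ac)

lemma trG_bb: assumes y: "y \<in> U"
  shows "trG g y (\<lambda>i j. flat g E y $ i * flat g E y $ j) = ginner g y (E y) (E y)"
proof -
  have "trG g y (\<lambda>i j. flat g E y $ i * flat g E y $ j) = (\<Sum>j\<in>UNIV. flat g E y $ j * (\<Sum>i\<in>UNIV. ginv g y $ j $ i * flat g E y $ i))"
    unfolding trG_def using G_sym[OF openU RM y]
    by (subst sum.swap) (simp add: sum_distrib_left mult_ac)
  also have "\<dots> = ginner g y (E y) (E y)" by (simp add: Gb[OF y] bE_E2[OF y])
  finally show ?thesis .
qed

lemma ginner_comp: "ginner g y v w = (\<Sum>i\<in>UNIV. \<Sum>j\<in>UNIV. g y $ i $ j * v $ i * w $ j)"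
  by (simp add: ginner_def)

lemma pd_flat: assumes y: "y \<in> U" and E: "\<And>i. smooth_on U (\<lambda>z. E z $ i)"
  shows "pd i (\<lambda>z. flat g E z $ j) y = (\<Sum>b\<in>UNIV. g y $ j $ b * cov g E i b y) + (\<Sum>e\<in>UNIV. christ g e i j y * flat g E y $ e)"
proof -
  define \<Gamma> where "\<Gamma> a b c = christ g a b c y" for a b c
  define gg where "gg a b = g y $ a $ b" for a b
  define ev where "ev a = E y $ a" for a
  define dE where "dE a = pd i (\<lambda>z. E z $ a) y" for a
  have dE': "\<And>a. (\<lambda>z. E z $ a) differentiable at y" using E y sm_diffat by blast
  have dg': "\<And>a b. (\<lambda>z. g z $ a $ b) differentiable at y" using dg[OF openU RM y] .
  have L: "pd i (\<lambda>z. flat g E z $ j) y = (\<Sum>l\<in>UNIV. gg j l * dE l)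
     + (\<Sum>l\<in>UNIV. \<Sum>e\<in>UNIV. gg j e * \<Gamma> e i l * ev l) + (\<Sum>l\<in>UNIV. \<Sum>e\<in>UNIV. gg l e * \<Gamma> e i j * ev l)"
    unfolding flat_def using dE' dg'
    by (simp add: pd_sum pd_mult differentiable_mult Dg[OF openU RM y] sum.distrib distrib_right
        sum_distrib_right \<Gamma>_def gg_def ev_def dE_def)
  have R: "(\<Sum>b\<in>UNIV. g y $ j $ b * cov g E i b y) + (\<Sum>e\<in>UNIV. christ g e i j y * flat g E y $ e)
     = (\<Sum>b\<in>UNIV. gg j b * dE b) + (\<Sum>b\<in>UNIV. \<Sum>l\<in>UNIV. gg j b * \<Gamma> b i l * ev l)
       + (\<Sum>e\<in>UNIV. \<Sum>l\<in>UNIV. gg l e * \<Gamma> e i j * ev l)"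
    using g_sym[OF openU RM y]
    by (simp add: cov_def flat_def distrib_left sum.distrib sum_distrib_left \<Gamma>_def gg_def ev_def dE_def mult_ac)
  have s1: "(\<Sum>l\<in>UNIV. \<Sum>e\<in>UNIV. gg j e * \<Gamma> e i l * ev l) = (\<Sum>b\<in>UNIV. \<Sum>l\<in>UNIV. gg j b * \<Gamma> b i l * ev l)"
    by (rule sum.swap)
  have s2: "(\<Sum>l\<in>UNIV. \<Sum>e\<in>UNIV. gg l e * \<Gamma> e i j * ev l) = (\<Sum>e\<in>UNIV. \<Sum>l\<in>UNIV. gg l e * \<Gamma> e i j * ev l)"
    by (rule sum.swap)
  show ?thesis unfolding L R s1 s2 ..
qed

lemma closed_rel:
  assumes y: "y \<in> U" and f: "smooth_on U f" and E: "\<And>i. smooth_on U (\<lambda>z. E z $ i)"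
    and cl: "closed_form_on U (\<lambda>x. f x *\<^sub>R flat g E x)"
  shows "f y * ((\<Sum>b\<in>UNIV. g y $ j $ b * cov g E i b y) - (\<Sum>b\<in>UNIV. g y $ i $ b * cov g E j b y))
     = pd j f y * flat g E y $ i - pd i f y * flat g E y $ j"
proof -
  have fl: "\<And>a. smooth_on U (\<lambda>z. flat g E z $ a)"
    unfolding flat_def vec_lambda_beta by (intro sm_sumU[OF openU] sm_mult[OF openU] g_sm[OF openU RM] E)
  have df: "f differentiable at y" using f y sm_diffat by blast
  have dfl: "\<And>a. (\<lambda>z. flat g E z $ a) differentiable at y" using fl y sm_diffat by blast
  have "pd i (\<lambda>z. f z * flat g E z $ j) y = pd j (\<lambda>z. f z * flat g E z $ i) y"
    using cl y unfolding closed_form_on_def by simp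
  then have "f y * pd i (\<lambda>z. flat g E z $ j) y + pd i f y * flat g E y $ j
      = f y * pd j (\<lambda>z. flat g E z $ i) y + pd j f y * flat g E y $ i"
    using df dfl by (simp add: pd_mult)
  then show ?thesis
    unfolding pd_flat[OF y E] using christ_sym[OF openU RM y]
    by (simp add: algebra_simps)
qed

end




lemma final_alg0:
  fixes F n p L E2 df2 phv S1 S2 PAA Aee RXX R :: real
  assumes F: "F \<noteq> 0" and p: "p \<noteq> 0" and n0: "n \<noteq> 0" and np: "n = p + 1" and R: "R = 2*L + 2*E2"
    and S: "S1 = S2 + (phv*phv - df2*E2)/F"
  shows "(2/F)*(F*F*(PAA + 4*Aee + (R/n - 2/p*L - 2/p*E2)*(R/n - 2/p*L - 2/p*E2)*n + 4*(R/n - 2/p*L - 2/p*E2)*E2 + 4*(E2*E2))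
       + (2/p*((n-2)*E2 - L)*df2 + 2/p*(n-2)*F*(2*S1) + RXX))
      + (-2/(F*F))*(F*(RXX - (2/p*L + 2/p*E2)*df2 + 2*(phv*phv)))
      - 4*(F*(Aee + (R/n - 2/p*L - 2/p*E2)*E2 + 2*(E2*E2)) + S2)
      + (2/(n*p)*R*(2/p*((n-2)*E2 - L)*F) + 4*(2/(n*p))*S1) = 2*F*PAA + 4*F*Aee + (n-2)/n*(4*S1)"
  unfolding S R using F p n0
  apply (simp add: field_simps)
  apply (simp add: np algebra_simps)
  done




lemma sharp_comb:
  "sharp g (\<lambda>y. a y *\<^sub>R (w1 y - w2 y + w3 y)) z = a z *\<^sub>R (sharp g w1 z - sharp g w2 z + sharp g w3 z)"
  by (simp add: sharp_def vec_eq_iff algebra_simps sum.distrib sum_subtractf sum_distrib_left)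

lemma sharp_scale: "sharp g (\<lambda>y. s y *\<^sub>R w y) z = s z *\<^sub>R sharp g w z"
  by (simp add: sharp_def vec_eq_iff algebra_simps sum_distrib_left)

lemma pd_cmult: "h differentiable at x \<Longrightarrow> pd i (\<lambda>y. c * h y) x = c * pd i h x"
  using pd_mult[of "\<lambda>y. c" x h i] by (simp add: pd_const)

theorem lemma2p4:
  fixes U :: "(real^'n::finite) set"
    and g :: "real^'n \<Rightarrow> real^'n^'n" and f :: "real^'n \<Rightarrow> real"
    and E :: "real^'n \<Rightarrow> real^'n" and \<Lambda> :: real
  assumes "CARD('n) \<ge> 3"
    and "electrostatic_system U g f E \<Lambda>"
    and "x \<in> U" and "f x > 0"
  shows "divv g (sharp g (\<lambda>y. (1 / f y) *\<^sub>R
            (dif (\<lambda>z. ginner g z (grad g f z) (grad g f z)) y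
             - (4 * f y * ginner g y (grad g f y) (E y)) *\<^sub>R flat g E y
             + (2 * scal g y * f y / (real CARD('n) * (real CARD('n) - 1))) *\<^sub>R dif f y))) x
       = 2 * f x * tnorm2 g (tricci g) x
         + 4 * f x * (\<Sum>i\<in>UNIV. \<Sum>j\<in>UNIV. tricci g i j x * E x $ i * E x $ j)
         + (real CARD('n) - 2) / real CARD('n) * ginner g x (grad g (scal g) x) (grad g f x)"
proof -
  have openU: "open U" and RM: "riemannian_metric_on U g" and fsm: "smooth_on U f"
    and Esm: "\<And>i. smooth_on U (\<lambda>x. E x $ i)" and fpos: "\<And>y. y \<in> U \<Longrightarrow> f y > 0"
    and hessEq: "\<And>y i j. y \<in> U \<Longrightarrow> hess g f i j y = f y * (ricci g i j y - 2 / (real CARD('n) - 1) * \<Lambda> * g y $ i $ j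
          + 2 * flat g E y $ i * flat g E y $ j
          - 2 / (real CARD('n) - 1) * ginner g y (E y) (E y) * g y $ i $ j)"
    and lapEq: "\<And>y. y \<in> U \<Longrightarrow> lap g f y = 2 / (real CARD('n) - 1) * ((real CARD('n) - 2) * ginner g y (E y) (E y) - \<Lambda>) * f y"
    and divE: "\<And>y. y \<in> U \<Longrightarrow> divv g E y = 0"
    and cl: "closed_form_on U (\<lambda>x. f x *\<^sub>R flat g E x)"
    using assms(2) unfolding electrostatic_system_def by auto
  have x: "x \<in> U" by fact
  define n where "n = real CARD('n)"
  define p where "p = n - 1"
  have n3: "n \<ge> 3" using assms(1) unfolding n_def by simp
  have p0: "p \<noteq> 0" and n0: "n \<noteq> 0" and np: "n = p + 1" using n3 by (auto simp: p_def)
  let ?X = "grad g f"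
  define N where "N z = (\<chi> k. \<Sum>j\<in>UNIV. ?X z $ j * cov g ?X j k z)" for z
  define phi where "phi z = ginner g z (?X z) (E z)" for z
  define E2 where "E2 z = ginner g z (E z) (E z)" for z
  define ka where "ka z = 2 / p * ((n - 2) * E2 z - \<Lambda>)" for z
  define c where "c = 2 / (n * p)"
  define F where "F = f x"
  have F0: "F \<noteq> 0" using assms(4) by (simp add: F_def)
  have fne: "\<And>y. y \<in> U \<Longrightarrow> f y \<noteq> 0" using fpos by force

  have Xsm: "\<And>k. smooth_on U (\<lambda>z. ?X z $ k)" using grad_sm[OF openU RM fsm] .
  have Nsm: "\<And>k. smooth_on U (\<lambda>z. N z $ k)"
    unfolding N_def vec_lambda_beta
    by (intro sm_sumU[OF openU] sm_mult[OF openU] Xsm cov_sm[OF openU RM])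
  have gsm: "\<And>i j. smooth_on U (\<lambda>z. g z $ i $ j)" using g_sm[OF openU RM] .
  have phism: "smooth_on U phi"
    unfolding phi_def ginner_def
    by (intro sm_sumU[OF openU] sm_mult[OF openU] Xsm Esm gsm)
  have E2sm: "smooth_on U E2"
    unfolding E2_def ginner_def
    by (intro sm_sumU[OF openU] sm_mult[OF openU] Esm gsm)
  have ricsm: "\<And>i j. smooth_on U (\<lambda>y. ricci g i j y)"
    unfolding ricci_def
    by (intro sm_sumU[OF openU] sm_mult[OF openU] sm_add[OF openU] sm_diff[OF openU] sm_pd
        christ_sm[OF openU RM])
  have scalsm: "smooth_on U (scal g)"
  proof -
    have "smooth_on U (\<lambda>y. \<Sum>i\<in>UNIV. \<Sum>j\<in>UNIV. ginv g y $ i $ j * ricci g i j y)"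
      by (intro sm_sumU[OF openU] sm_mult[OF openU] ricsm G_sm[OF openU RM])
    then show ?thesis by (rule sm_cong[OF openU, rotated]) (simp add: scal_def)
  qed
  have finvsm: "smooth_on U (\<lambda>z. 2 / f z)"
    by (intro sm_divide[OF openU] sm_const[OF openU] fsm) (use fne in auto)
  have dXx: "\<And>k. (\<lambda>z. ?X z $ k) differentiable at x" using Xsm x sm_diffat by blast
  have dNx: "\<And>k. (\<lambda>z. N z $ k) differentiable at x" using Nsm x sm_diffat by blast
  have dEx: "\<And>k. (\<lambda>z. E z $ k) differentiable at x" using Esm x sm_diffat by blast
  have dphix: "phi differentiable at x" using phism x sm_diffat by blast
  have dE2x: "E2 differentiable at x" using E2sm x sm_diffat by blast
  have dscalx: "scal g differentiable at x" using scalsm x sm_diffat by blast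
  have dfinvx: "(\<lambda>z. 2 / f z) differentiable at x" using finvsm x sm_diffat by blast
  have dfx: "f differentiable at x" using fsm x sm_diffat by blast

  define al where "al = 2 / p"
  have hessEq': "hess g f i j y = f y * (ricci g i j y - al * \<Lambda> * g y $ i $ j
          + 2 * (flat g E y $ i * flat g E y $ j) - al * E2 y * g y $ i $ j)" if y: "y \<in> U" for y i j
    using hessEq[OF y, of i j] by (simp add: al_def p_def n_def E2_def)
  have scalEq: "scal g y = 2 * \<Lambda> + 2 * E2 y" if y: "y \<in> U" for y
  proof -
    have "lap g f y = trG g y (\<lambda>i j. hess g f i j y)" by (simp add: lap_def trG_def)
    also have "\<dots> = f y * (trG g y (\<lambda>i j. ricci g i j y) - al * \<Lambda> * trG g y (\<lambda>i j. g y $ i $ j)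
          + 2 * trG g y (\<lambda>i j. flat g E y $ i * flat g E y $ j)
          - al * E2 y * trG g y (\<lambda>i j. g y $ i $ j))"
      unfolding trG_def hessEq'[OF y]
      by (simp add: algebra_simps sum.distrib sum_subtractf sum_distrib_left)
    also have "\<dots> = f y * (scal g y - al * \<Lambda> * n + 2 * E2 y - al * E2 y * n)"
      using trG_g[OF openU RM y] trG_bb[OF openU RM y, of E]
      by (simp add: trG_def scal_def E2_def n_def)
    finally have "f y * (scal g y - al * \<Lambda> * n + 2 * E2 y - al * E2 y * n) = f y * (al * ((n - 2) * E2 y - \<Lambda>))"
      using lapEq[OF y] by (simp add: E2_def n_def p_def al_def mult_ac)
    then have "scal g y - al * \<Lambda> * n + 2 * E2 y - al * E2 y * n = al * ((n - 2) * E2 y - \<Lambda>)"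
      using fne[OF y] by simp
    then have "scal g y = al * \<Lambda> * n - 2 * E2 y + al * E2 y * n + al * ((n - 2) * E2 y - \<Lambda>)"
      by linarith
    also have "\<dots> = (al * p) * \<Lambda> + 2 * (al * p) * E2 y - 2 * E2 y"
      by (simp add: np algebra_simps)
    also have "al * p = 2" using p0 by (simp add: al_def)
    finally show ?thesis by simp
  qed

  define V where "V z = (2 / f z) *\<^sub>R N z - (4 * phi z) *\<^sub>R E z + (c * scal g z) *\<^sub>R ?X z" for z
  have stepA: "divv g (sharp g (\<lambda>y. (1 / f y) *\<^sub>R
            (dif (\<lambda>z. ginner g z (grad g f z) (grad g f z)) y
             - (4 * f y * ginner g y (grad g f y) (E y)) *\<^sub>R flat g E y
             + (2 * scal g y * f y / (real CARD('n) * (real CARD('n) - 1))) *\<^sub>R dif f y))) x = divv g V x"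
  proof (rule divv_cong[OF openU x])
    fix z assume z: "z \<in> U"
    have "sharp g (\<lambda>y. (1 / f y) *\<^sub>R
            (dif (\<lambda>z. ginner g z (grad g f z) (grad g f z)) y
             - (4 * f y * ginner g y (grad g f y) (E y)) *\<^sub>R flat g E y
             + (2 * scal g y * f y / (real CARD('n) * (real CARD('n) - 1))) *\<^sub>R dif f y)) z
        = (1 / f z) *\<^sub>R (2 *\<^sub>R N z - (4 * f z * phi z) *\<^sub>R E z + (2 * scal g z * f z / (n * p)) *\<^sub>R ?X z)"
      unfolding sharp_comb sharp_scale sharp_dQ[OF openU RM z fsm] sharp_flat[OF openU RM z]
      by (simp add: N_def phi_def grad_def n_def p_def)
    also have "\<dots> = V z"
      using fne[OF z] by (simp add: V_def vec_eq_iff c_def field_simps)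
    finally show "sharp g (\<lambda>y. (1 / f y) *\<^sub>R
            (dif (\<lambda>z. ginner g z (grad g f z) (grad g f z)) y
             - (4 * f y * ginner g y (grad g f y) (E y)) *\<^sub>R flat g E y
             + (2 * scal g y * f y / (real CARD('n) * (real CARD('n) - 1))) *\<^sub>R dif f y)) z = V z" .
  qed

  have Vfun: "V = (\<lambda>z. ((2 / f z) *\<^sub>R N z - (4 * phi z) *\<^sub>R E z) + (c * scal g z) *\<^sub>R ?X z)"
    by (rule ext) (simp add: V_def)
  have dA: "\<And>i. (\<lambda>z. ((2 / f z) *\<^sub>R N z) $ i) differentiable at x"
    using differentiable_mult[OF dfinvx dNx] by simp
  have dB: "\<And>i. (\<lambda>z. ((4 * phi z) *\<^sub>R E z) $ i) differentiable at x"
    using dphix dEx by (simp add: differentiable_mult differentiable_const)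
  have dAB: "\<And>i. (\<lambda>z. ((2 / f z) *\<^sub>R N z - (4 * phi z) *\<^sub>R E z) $ i) differentiable at x"
    using dA dB by (simp add: differentiable_diff del: vector_scaleR_component)
  have dC: "\<And>i. (\<lambda>z. ((c * scal g z) *\<^sub>R ?X z) $ i) differentiable at x"
    using dscalx dXx by (simp add: differentiable_mult differentiable_const)
  have d4phi: "(\<lambda>z. 4 * phi z) differentiable at x" using dphix by (simp add: differentiable_mult differentiable_const)
  have dcscal: "(\<lambda>z. c * scal g z) differentiable at x" using dscalx by (simp add: differentiable_mult differentiable_const)
  have stepB: "divv g V x = (2 / F * divv g N x + (\<Sum>k\<in>UNIV. pd k (\<lambda>z. 2 / f z) x * N x $ k))
      - (4 * phi x * divv g E x + (\<Sum>k\<in>UNIV. pd k (\<lambda>z. 4 * phi z) x * E x $ k))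
      + (c * scal g x * divv g ?X x + (\<Sum>k\<in>UNIV. pd k (\<lambda>z. c * scal g z) x * ?X x $ k))"
    unfolding Vfun divv_add[OF dAB dC] divv_diff[OF dA dB]
      divv_scale[OF dNx dfinvx] divv_scale[OF dEx d4phi] divv_scale[OF dXx dcscal]
    by (simp add: F_def)

  have divXeq: "divv g ?X z = ka z * f z" if z: "z \<in> U" for z
  proof -
    have "divv g ?X z = lap g f z"
      unfolding divv_cov cov_grad[OF openU RM z fsm] lap_def ..
    also have "\<dots> = ka z * f z" using lapEq[OF z] by (simp add: ka_def E2_def p_def n_def)
    finally show ?thesis .
  qed
  have kasm: "smooth_on U ka"
    unfolding ka_def by (intro sm_mult[OF openU] sm_diff[OF openU] sm_const[OF openU] E2sm)
  have dkax: "ka differentiable at x" using kasm x sm_diffat by blast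
  have pE2: "pd k E2 x = 2 * (\<Sum>a\<in>UNIV. \<Sum>b\<in>UNIV. g x $ a $ b * E x $ a * cov g E k b x)" for k
  proof -
    have "pd k E2 x = pd k (\<lambda>z. ginner g z (E z) (E z)) x" unfolding E2_def ..
    also have "\<dots> = (\<Sum>a\<in>UNIV. \<Sum>b\<in>UNIV. g x $ a $ b * (cov g E k a x * E x $ b + E x $ a * cov g E k b x))"
      by (rule metric_compat[OF openU RM x dEx dEx])
    also have "\<dots> = (\<Sum>a\<in>UNIV. \<Sum>b\<in>UNIV. g x $ b $ a * cov g E k a x * E x $ b)
         + (\<Sum>a\<in>UNIV. \<Sum>b\<in>UNIV. g x $ a $ b * E x $ a * cov g E k b x)"
      using g_sym[OF openU RM x] by (simp add: distrib_left sum.distrib mult_ac)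
    also have "(\<Sum>a\<in>UNIV. \<Sum>b\<in>UNIV. g x $ b $ a * cov g E k a x * E x $ b)
        = (\<Sum>a\<in>UNIV. \<Sum>b\<in>UNIV. g x $ a $ b * E x $ a * cov g E k b x)"
      by (subst sum.swap) (simp add: mult_ac)
    finally show ?thesis by simp
  qed
  have pphi: "pd k phi x = (\<Sum>a\<in>UNIV. \<Sum>b\<in>UNIV. g x $ a $ b * (cov g ?X k a x * E x $ b + ?X x $ a * cov g E k b x))" for k
  proof -
    have "pd k phi x = pd k (\<lambda>z. ginner g z (?X z) (E z)) x" unfolding phi_def ..
    also have "\<dots> = (\<Sum>a\<in>UNIV. \<Sum>b\<in>UNIV. g x $ a $ b * (cov g ?X k a x * E x $ b + ?X x $ a * cov g E k b x))"
      by (rule metric_compat[OF openU RM x dXx dEx])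
    finally show ?thesis .
  qed
  have pscal: "pd k (scal g) x = 2 * pd k E2 x" for k
  proof -
    have "pd k (scal g) x = pd k (\<lambda>z. 2 * \<Lambda> + 2 * E2 z) x"
      by (rule pd_cong[OF openU x]) (simp add: scalEq)
    also have "\<dots> = 2 * pd k E2 x"
      using dE2x by (simp add: pd_add pd_const pd_cmult differentiable_mult differentiable_const)
    finally show ?thesis .
  qed
  have pfinv: "pd k (\<lambda>z. 2 / f z) x = - 2 * pd k f x / (F * F)" for k
  proof -
    have "pd k (\<lambda>z. 2 / f z) x = pd k (\<lambda>z. 2 * inverse (f z)) x" by (simp add: divide_inverse)
    also have "\<dots> = 2 * pd k (\<lambda>z. inverse (f z)) x"
      using dfx F0 by (simp add: pd_cmult differentiable_inverse F_def)
    also have "\<dots> = - 2 * pd k f x / (F * F)" using dfx F0 by (simp add: pd_inverse F_def)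
    finally show ?thesis .
  qed
  have pdivX: "pd j (divv g ?X) x = ka x * pd j f x + 2 / p * (n - 2) * pd j E2 x * F" for j
  proof -
    have "pd j (divv g ?X) x = pd j (\<lambda>z. ka z * f z) x"
      by (rule pd_cong[OF openU x]) (simp add: divXeq)
    also have "\<dots> = ka x * pd j f x + pd j ka x * F" using dkax dfx by (simp add: pd_mult F_def)
    also have "pd j ka x = 2 / p * (n - 2) * pd j E2 x"
    proof -
      have "pd j ka x = pd j (\<lambda>z. 2 / p * ((n - 2) * E2 z - \<Lambda>)) x" unfolding ka_def ..
      also have "\<dots> = pd j (\<lambda>z. (2 / p * (n - 2)) * E2 z - 2 / p * \<Lambda>) x"
      proof -
        have "(\<lambda>z. 2 / p * ((n - 2) * E2 z - \<Lambda>)) = (\<lambda>z. (2 / p * (n - 2)) * E2 z - 2 / p * \<Lambda>)"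
          by (rule ext) (use p0 in \<open>simp add: field_simps\<close>)
        then show ?thesis by (simp only:)
      qed
      also have "\<dots> = pd j (\<lambda>z. (2 / p * (n - 2)) * E2 z) x - pd j (\<lambda>z. 2 / p * \<Lambda>) x"
        by (rule pd_diff[OF differentiable_mult[OF differentiable_const dE2x] differentiable_const])
      also have "\<dots> = 2 / p * (n - 2) * pd j E2 x"
        using dE2x by (simp only: pd_cmult pd_const)
      finally show ?thesis .
    qed
    finally show ?thesis by simp
  qed
  have Nfun: "N = (\<lambda>z. \<chi> k. \<Sum>j\<in>UNIV. ?X z $ j * cov g ?X j k z)" by (rule ext) (simp add: N_def)
  have divN: "divv g N x = (\<Sum>j\<in>UNIV. \<Sum>k\<in>UNIV. cov g ?X k j x * cov g ?X j k x)
     + (\<Sum>j\<in>UNIV. ?X x $ j * (pd j (divv g ?X) x + (\<Sum>l\<in>UNIV. ricci g l j x * ?X x $ l)))"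
    unfolding Nfun divv_nabla[OF openU RM x Xsm]
    using commute[OF openU RM x Xsm] by (simp add: algebra_simps)

  define E2x where "E2x = E2 x"
  define R where "R = scal g x"
  define t where "t = R / n - al * \<Lambda> - al * E2x"
  have Hdec: "hess g f i j x = F * (tricci g i j x + (t * g x $ i $ j + 2 * (flat g E x $ i * flat g E x $ j)))" for i j
    unfolding hessEq'[OF x] tricci_def t_def F_def R_def E2x_def n_def by (simp add: algebra_simps)
  have Gee: "(\<Sum>i\<in>UNIV. \<Sum>j\<in>UNIV. g x $ i $ j * E x $ i * E x $ j) = E2x"
    by (simp add: E2x_def E2_def ginner_def)
  have bbee: "(\<Sum>i\<in>UNIV. \<Sum>j\<in>UNIV. flat g E x $ i * flat g E x $ j * E x $ i * E x $ j) = E2x * E2x"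
  proof -
    have "(\<Sum>i\<in>UNIV. \<Sum>j\<in>UNIV. flat g E x $ i * flat g E x $ j * E x $ i * E x $ j)
       = (\<Sum>i\<in>UNIV. flat g E x $ i * E x $ i) * (\<Sum>j\<in>UNIV. flat g E x $ j * E x $ j)"
      by (simp add: sum_distrib_left sum_distrib_right mult_ac)
    then show ?thesis using bE_E2[OF openU RM x, of E] by (simp add: E2x_def E2_def)
  qed
  have trA0: "trG g x (\<lambda>i j. tricci g i j x) = 0"
  proof -
    have "trG g x (\<lambda>i j. tricci g i j x) = trG g x (\<lambda>i j. ricci g i j x) - scal g x / n * trG g x (\<lambda>i j. g x $ i $ j)"
      by (simp add: trG_def tricci_def n_def right_diff_distrib sum_subtractf sum_distrib_left mult_ac)
    then show ?thesis using trG_g[OF openU RM x] n0 by (simp add: trG_def scal_def n_def)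
  qed
  have trbb: "trG g x (\<lambda>i j. flat g E x $ i * flat g E x $ j) = E2x"
    using trG_bb[OF openU RM x, of E] by (simp add: E2x_def E2_def)
  have trgg: "trG g x (\<lambda>i j. g x $ i $ j) = n" using trG_g[OF openU RM x] by (simp add: n_def)

  define HH where "HH = (\<Sum>j\<in>UNIV. \<Sum>k\<in>UNIV. cov g ?X k j x * cov g ?X j k x)"
  define PAA where "PAA = tnorm2 g (tricci g) x"
  define Aee where "Aee = (\<Sum>i\<in>UNIV. \<Sum>j\<in>UNIV. tricci g i j x * E x $ i * E x $ j)"
  have HHtp: "HH = tp g x (\<lambda>i j. hess g f i j x) (\<lambda>i j. hess g f i j x)"
  proof -
    let ?T = "\<lambda>j k d e. ginv g x $ j $ d * hess g f k d x * (ginv g x $ k $ e * hess g f j e x)"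
    have "HH = (\<Sum>j\<in>UNIV. \<Sum>k\<in>UNIV. \<Sum>e\<in>UNIV. \<Sum>d\<in>UNIV. ?T j k d e)"
      unfolding HH_def cov_grad[OF openU RM x fsm]
      by (simp add: sum_distrib_left sum_distrib_right)
    also have "\<dots> = (\<Sum>k\<in>UNIV. \<Sum>e\<in>UNIV. \<Sum>d\<in>UNIV. \<Sum>j\<in>UNIV. ?T j k d e)" by (rule sum4_rot)
    also have "\<dots> = (\<Sum>k\<in>UNIV. \<Sum>d\<in>UNIV. \<Sum>e\<in>UNIV. \<Sum>j\<in>UNIV. ?T j k d e)"
      by (rule sum.cong[OF refl]) (rule sum.swap)
    also have "\<dots> = tp g x (\<lambda>i j. hess g f i j x) (\<lambda>i j. hess g f i j x)"
      unfolding tp_def using G_sym[OF openU RM x] hess_sym[OF openU RM x fsm]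
      by (simp add: mult_ac)
    finally show ?thesis .
  qed
  have R1: "HH = F * F * (PAA + 4 * Aee + t * t * n + 4 * t * E2x + 4 * (E2x * E2x))"
  proof -
    have "HH = tp g x (\<lambda>i j. F * (tricci g i j x + (t * g x $ i $ j + 2 * (flat g E x $ i * flat g E x $ j))))
                      (\<lambda>i j. F * (tricci g i j x + (t * g x $ i $ j + 2 * (flat g E x $ i * flat g E x $ j))))"
      unfolding HHtp Hdec ..
    also have "\<dots> = F * (F * (tp g x (\<lambda>i j. tricci g i j x) (\<lambda>i j. tricci g i j x)
         + (t * tp g x (\<lambda>i j. tricci g i j x) (\<lambda>i j. g x $ i $ j)
         + 2 * tp g x (\<lambda>i j. tricci g i j x) (\<lambda>i j. flat g E x $ i * flat g E x $ j))
         + (t * (tp g x (\<lambda>i j. g x $ i $ j) (\<lambda>i j. tricci g i j x)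
         + (t * tp g x (\<lambda>i j. g x $ i $ j) (\<lambda>i j. g x $ i $ j)
         + 2 * tp g x (\<lambda>i j. g x $ i $ j) (\<lambda>i j. flat g E x $ i * flat g E x $ j)))
         + 2 * (tp g x (\<lambda>i j. flat g E x $ i * flat g E x $ j) (\<lambda>i j. tricci g i j x)
         + (t * tp g x (\<lambda>i j. flat g E x $ i * flat g E x $ j) (\<lambda>i j. g x $ i $ j)
         + 2 * tp g x (\<lambda>i j. flat g E x $ i * flat g E x $ j) (\<lambda>i j. flat g E x $ i * flat g E x $ j))))))"
      by (simp only: tp_scale1 tp_scale2 tp_add1 tp_add2)
    also have "\<dots> = F * F * (PAA + 4 * Aee + t * t * n + 4 * t * E2x + 4 * (E2x * E2x))"
      unfolding tp_g2[OF openU RM x] tp_bb2[OF openU RM x] tp_g1[OF openU RM x] tp_bb1[OF openU RM x]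
        trA0 trbb trgg Gee bbee PAA_def Aee_def tnorm2_tp
      by (simp add: algebra_simps)
    finally show ?thesis .
  qed

  define df2 where "df2 = (\<Sum>j\<in>UNIV. ?X x $ j * pd j f x)"
  define phv where "phv = (\<Sum>k\<in>UNIV. pd k f x * E x $ k)"
  define RXX where "RXX = (\<Sum>j\<in>UNIV. ?X x $ j * (\<Sum>l\<in>UNIV. ricci g l j x * ?X x $ l))"
  define HXX where "HXX = (\<Sum>k\<in>UNIV. pd k f x * N x $ k)"
  define Hee where "Hee = (\<Sum>k\<in>UNIV. E x $ k * (\<Sum>a\<in>UNIV. \<Sum>b\<in>UNIV. g x $ a $ b * cov g ?X k a x * E x $ b))"
  define S1 where "S1 = (\<Sum>j\<in>UNIV. ?X x $ j * (\<Sum>a\<in>UNIV. \<Sum>b\<in>UNIV. g x $ a $ b * E x $ a * cov g E j b x))"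
  define S2 where "S2 = (\<Sum>k\<in>UNIV. E x $ k * (\<Sum>a\<in>UNIV. \<Sum>b\<in>UNIV. g x $ a $ b * ?X x $ a * cov g E k b x))"
  have Xc: "?X x $ k = (\<Sum>d\<in>UNIV. ginv g x $ k $ d * pd d f x)" for k
    by (rule grad_comp[OF openU RM])
  have gX: "(\<Sum>d\<in>UNIV. g x $ j $ d * ?X x $ d) = pd j f x" for j
    unfolding Xc using contr1[of "\<lambda>a b. g x $ a $ b" "\<lambda>a b. ginv g x $ a $ b" j "\<lambda>d. pd d f x"] gG[OF openU RM x]
    by simp
  have Xb: "(\<Sum>j\<in>UNIV. ?X x $ j * flat g E x $ j) = phv"
  proof -
    have "(\<Sum>j\<in>UNIV. ?X x $ j * flat g E x $ j) = (\<Sum>j\<in>UNIV. \<Sum>l\<in>UNIV. ?X x $ j * g x $ j $ l * E x $ l)"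
      unfolding flat_def by (simp add: sum_distrib_left mult_ac)
    also have "\<dots> = (\<Sum>l\<in>UNIV. \<Sum>j\<in>UNIV. ?X x $ j * g x $ j $ l * E x $ l)" by (rule sum.swap)
    also have "\<dots> = (\<Sum>l\<in>UNIV. (\<Sum>j\<in>UNIV. g x $ l $ j * ?X x $ j) * E x $ l)"
      using g_sym[OF openU RM x] by (simp add: sum_distrib_right sum_distrib_left mult_ac)
    finally have "(\<Sum>j\<in>UNIV. ?X x $ j * flat g E x $ j) = (\<Sum>l\<in>UNIV. (\<Sum>j\<in>UNIV. g x $ l $ j * ?X x $ j) * E x $ l)" .
    then show ?thesis by (simp only: gX) (simp add: phv_def mult_ac)
  qed
  have XXg: "(\<Sum>j\<in>UNIV. ?X x $ j * (\<Sum>d\<in>UNIV. ?X x $ d * g x $ j $ d)) = df2"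
    using gX by (simp add: df2_def mult_ac)
  have R2: "HXX = F * (RXX - (al * \<Lambda> + al * E2x) * df2 + 2 * (phv * phv))"
  proof -
    have "HXX = (\<Sum>k\<in>UNIV. \<Sum>j\<in>UNIV. \<Sum>d\<in>UNIV. pd k f x * (?X x $ j * (ginv g x $ k $ d * hess g f j d x)))"
      unfolding HXX_def N_def cov_grad[OF openU RM x fsm] by (simp add: sum_distrib_left)
    also have "\<dots> = (\<Sum>j\<in>UNIV. \<Sum>k\<in>UNIV. \<Sum>d\<in>UNIV. pd k f x * (?X x $ j * (ginv g x $ k $ d * hess g f j d x)))"
      by (rule sum.swap)
    also have "\<dots> = (\<Sum>j\<in>UNIV. \<Sum>d\<in>UNIV. \<Sum>k\<in>UNIV. pd k f x * (?X x $ j * (ginv g x $ k $ d * hess g f j d x)))"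
      by (rule sum.cong[OF refl]) (rule sum.swap)
    also have "\<dots> = (\<Sum>j\<in>UNIV. ?X x $ j * (\<Sum>d\<in>UNIV. ?X x $ d * hess g f j d x))"
      unfolding Xc using G_sym[OF openU RM x] by (simp add: sum_distrib_left sum_distrib_right mult_ac)
    also have "\<dots> = F * ((\<Sum>j\<in>UNIV. ?X x $ j * (\<Sum>d\<in>UNIV. ?X x $ d * ricci g j d x))
        - (al * \<Lambda> + al * E2x) * (\<Sum>j\<in>UNIV. ?X x $ j * (\<Sum>d\<in>UNIV. ?X x $ d * g x $ j $ d))
        + 2 * ((\<Sum>j\<in>UNIV. ?X x $ j * flat g E x $ j) * (\<Sum>d\<in>UNIV. ?X x $ d * flat g E x $ d)))"
      unfolding hessEq'[OF x] F_def E2x_def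
      by (simp add: algebra_simps sum.distrib sum_subtractf sum_distrib_left sum_distrib_right)
    also have "(\<Sum>j\<in>UNIV. ?X x $ j * (\<Sum>d\<in>UNIV. ?X x $ d * ricci g j d x)) = RXX"
    proof -
      have "(\<Sum>j\<in>UNIV. ?X x $ j * (\<Sum>d\<in>UNIV. ?X x $ d * ricci g j d x))
          = (\<Sum>j\<in>UNIV. \<Sum>d\<in>UNIV. ?X x $ j * ?X x $ d * ricci g j d x)"
        by (simp add: sum_distrib_left mult_ac)
      also have "\<dots> = (\<Sum>d\<in>UNIV. \<Sum>j\<in>UNIV. ?X x $ j * ?X x $ d * ricci g j d x)" by (rule sum.swap)
      also have "\<dots> = RXX" unfolding RXX_def by (simp add: sum_distrib_left mult_ac)
      finally show ?thesis .
    qed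
    finally show ?thesis using Xb XXg by simp
  qed
  have R3: "Hee = F * (Aee + t * E2x + 2 * (E2x * E2x))"
  proof -
    have "Hee = (\<Sum>k\<in>UNIV. E x $ k * (\<Sum>b\<in>UNIV. (\<Sum>a\<in>UNIV. g x $ b $ a * cov g ?X k a x) * E x $ b))"
      unfolding Hee_def using g_sym[OF openU RM x]
      by (subst sum.swap) (simp add: sum_distrib_right sum_distrib_left mult_ac)
    also have "\<dots> = (\<Sum>k\<in>UNIV. E x $ k * (\<Sum>b\<in>UNIV. hess g f k b x * E x $ b))"
      by (simp add: cov_grad_low[OF openU RM x fsm])
    also have "\<dots> = F * ((\<Sum>i\<in>UNIV. \<Sum>j\<in>UNIV. tricci g i j x * E x $ i * E x $ j)
       + t * (\<Sum>i\<in>UNIV. \<Sum>j\<in>UNIV. g x $ i $ j * E x $ i * E x $ j)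
       + 2 * (\<Sum>i\<in>UNIV. \<Sum>j\<in>UNIV. flat g E x $ i * flat g E x $ j * E x $ i * E x $ j))"
      unfolding Hdec by (simp add: algebra_simps sum.distrib sum_distrib_left)
    finally show ?thesis unfolding Gee bbee Aee_def by simp
  qed
  have R4: "F * (S1 - S2) = phv * phv - df2 * E2x"
  proof -
    have s1: "S1 = (\<Sum>i\<in>UNIV. \<Sum>j\<in>UNIV. ?X x $ i * E x $ j * (\<Sum>b\<in>UNIV. g x $ j $ b * cov g E i b x))"
      unfolding S1_def by (simp add: sum_distrib_left mult_ac)
    have s2: "S2 = (\<Sum>i\<in>UNIV. \<Sum>j\<in>UNIV. ?X x $ i * E x $ j * (\<Sum>b\<in>UNIV. g x $ i $ b * cov g E j b x))"
      unfolding S2_def by (subst sum.swap) (simp add: sum_distrib_left mult_ac)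
    have "F * (S1 - S2) = (\<Sum>i\<in>UNIV. \<Sum>j\<in>UNIV. ?X x $ i * E x $ j *
        (F * ((\<Sum>b\<in>UNIV. g x $ j $ b * cov g E i b x) - (\<Sum>b\<in>UNIV. g x $ i $ b * cov g E j b x))))"
      unfolding s1 s2 by (simp add: sum_distrib_left right_diff_distrib sum_subtractf mult_ac)
    also have "\<dots> = (\<Sum>i\<in>UNIV. \<Sum>j\<in>UNIV. ?X x $ i * E x $ j * (pd j f x * flat g E x $ i - pd i f x * flat g E x $ j))"
      unfolding F_def closed_rel[OF openU RM x fsm Esm cl] ..
    also have "\<dots> = (\<Sum>i\<in>UNIV. \<Sum>j\<in>UNIV. ?X x $ i * E x $ j * (pd j f x * flat g E x $ i))
        - (\<Sum>i\<in>UNIV. \<Sum>j\<in>UNIV. ?X x $ i * E x $ j * (pd i f x * flat g E x $ j))"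
      by (simp add: right_diff_distrib sum_subtractf)
    also have "\<dots> = (\<Sum>i\<in>UNIV. ?X x $ i * flat g E x $ i) * (\<Sum>j\<in>UNIV. pd j f x * E x $ j)
        - (\<Sum>i\<in>UNIV. ?X x $ i * pd i f x) * (\<Sum>j\<in>UNIV. flat g E x $ j * E x $ j)"
      unfolding sum_product by (simp add: mult_ac)
    finally show ?thesis
      using Xb bE_E2[OF openU RM x, of E] by (simp add: phv_def df2_def E2x_def E2_def)
  qed

  have T1: "(\<Sum>j\<in>UNIV. ?X x $ j * (pd j (divv g ?X) x + (\<Sum>l\<in>UNIV. ricci g l j x * ?X x $ l)))
      = ka x * df2 + 2 / p * (n - 2) * F * (2 * S1) + RXX"
    unfolding pdivX pE2 df2_def S1_def RXX_def
    by (simp add: distrib_left sum.distrib sum_distrib_left mult_ac)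
  have T2: "(\<Sum>k\<in>UNIV. pd k (\<lambda>z. 2 / f z) x * N x $ k) = (-2 / (F * F)) * HXX"
    unfolding pfinv HXX_def by (simp add: sum_distrib_left mult_ac)
  have T3: "(\<Sum>k\<in>UNIV. pd k (\<lambda>z. 4 * phi z) x * E x $ k) = 4 * (Hee + S2)"
    unfolding pd_cmult[OF dphix] pphi Hee_def S2_def
    by (simp add: distrib_left distrib_right sum.distrib sum_distrib_left sum_distrib_right mult_ac)
  have T4: "(\<Sum>k\<in>UNIV. pd k (\<lambda>z. c * scal g z) x * ?X x $ k) = 4 * c * S1"
    unfolding pd_cmult[OF dscalx] pscal pE2 S1_def
    by (simp add: sum_distrib_left mult_ac)
  have RHSg: "ginner g x (grad g (scal g) x) (grad g f x) = 4 * S1"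
  proof -
    have "ginner g x (grad g (scal g) x) (grad g f x) = (\<Sum>k\<in>UNIV. pd k (scal g) x * ?X x $ k)"
      unfolding grad_def[of g "scal g"] ginner_sharp[OF openU RM x] by (simp add: dif_def)
    also have "\<dots> = 4 * S1" unfolding pscal pE2 S1_def by (simp add: sum_distrib_left mult_ac)
    finally show ?thesis .
  qed
  have Req: "R = 2 * \<Lambda> + 2 * E2x" unfolding R_def E2x_def by (rule scalEq[OF x])
  have Seq: "S1 = S2 + (phv * phv - df2 * E2x) / F" using R4 F0 by (simp add: field_simps)
  have main: "divv g V x = 2 / F * (HH + (ka x * df2 + 2 / p * (n - 2) * F * (2 * S1) + RXX)) + (-2 / (F * F)) * HXX
      - 4 * (Hee + S2) + (c * R * (ka x * F) + 4 * c * S1)"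
    unfolding stepB divN HH_def[symmetric] T1 T2 T3 T4 divE[OF x] divXeq[OF x]
    by (simp add: F_def R_def)
  have fin: "2 / F * (HH + (ka x * df2 + 2 / p * (n - 2) * F * (2 * S1) + RXX)) + (-2 / (F * F)) * HXX
      - 4 * (Hee + S2) + (c * R * (ka x * F) + 4 * c * S1) = 2 * F * PAA + 4 * F * Aee + (n - 2) / n * (4 * S1)"
    using final_alg0[OF F0 p0 n0 np Req Seq, of PAA Aee RXX]
    unfolding R1 R2 R3 t_def al_def ka_def c_def E2x_def[symmetric] by simp
  show ?thesis
    unfolding stepA main fin RHSg by (simp add: F_def PAA_def Aee_def n_def)
qed



end
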